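(* Let $n\ge1$; for $i\in[n]$ let $d_i\ge1$ be an integer, $p_{i0}<\cdots<p_{id_i}$ reals, $\mathcal{X}=\prod_i\{p_{i0},\dots,p_{id_i}\}$, and $f_i:\{p_{i0},\dots,p_{id_i}\}\to[L_i,U_i]$. Let $\phi:\prod_i[L_i,U_i]\to\mathbb{R}$ be supermodular. Let $\sigma=(\sigma_1,\dots,\sigma_n)$ where each $\sigma_i$ is a permutation of $\{0,\dots,d_i\}$ with $f_i(p_{i,\sigma_i(0)})\le f_i(p_{i,\sigma_i(1)})\le\cdots\le f_i(p_{i,\sigma_i(d_i)})$, and let $\psi^\sigma(\boldsymbol{j})=\phi(f_1(p_{1,\sigma_1(j_1)}),\dots,f_n(p_{n,\sigma_n(j_n)}))$ for $\boldsymbol{j}\in\mathcal{G}$. Then the set $$E=\Bigl\{(\boldsymbol{x},\boldsymbol{z},\mu):\boldsymbol{z}\in\{0,1\}^N,\ (x_i,\boldsymbol{z}_i)\in B_i\ \forall i,\ \boldsymbol{z}'=(L^\sigma)^{-1}(\boldsymbol{z}),\ \mu\le\psi^\sigma(\boldsymbol{j}^0)+\sum_{t\in[N]}\bigl(\psi^\sigma(\boldsymbol{j}^t)-\psi^\sigma(\boldsymbol{j}^{t-1})\bigr)z'_{\pi_t}\ \forall\pi\in\Pi\Bigr\}$$ (where for each $\pi$, $\boldsymbol{j}^0,\dots,\boldsymbol{j}^N$ is its point representation) is an ideal MIP formulation of the hypograph $\{(\boldsymbol{x},\mu)\in\mathcal{X}\times\mathbb{R}:\mu\le\phi(f_1(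x_1),\dots,f_n(x_n))\}$.
   Context: $[n]=\{1,\dots,n\}$, $N=\sum_i d_i$. A function $g$ on a set $X\subseteq\mathbb{R}^n$ closed under componentwise max $\vee$ and min $\wedge$ is supermodular if $g(\boldsymbol{x}\vee\boldsymbol{y})+g(\boldsymbol{x}\wedge\boldsymbol{y})\ge g(\boldsymbol{x})+g(\boldsymbol{y})$ for all $\boldsymbol{x},\boldsymbol{y}$. $\Delta^d=\{\boldsymbol{z}\in\mathbb{R}^d:1\ge z_1\ge\cdots\ge z_d\ge0\}$; variables $\boldsymbol{z}=(\boldsymbol{z}_1,\dots,\boldsymbol{z}_n)$, $\boldsymbol{z}_i\in\mathbb{R}^{d_i}$. $B_i=\{(x_i,\boldsymbol{z}_i):x_i=p_{i0}+\sum_{j\in[d_i]}(p_{ij}-p_{i,j-1})z_{ij},\ \boldsymbol{z}_i\in\Delta^{d_i}\}$. $\mathcal{G}=\prod_i\{0,1,\dots,d_i\}$. A staircase is a sequence $\pi=(\pi_1,\dots,\pi_N)$ with $\pi_t=(\pi_t(1),\pi_t(2))$, $\pi_t(1)\in[n]$, each $i$ occurring as $\pi_t(1)$ for exactly $d_i$ values of $t$, and $\pi_t(2)=|\{s\le t:\pi_s(1)=\pi_t(1)\}|$; $\Pi$ is the set of all staircases; $z'_{\pi_t}:=z'_{\pi_t(1),\pi_t(2)}$. Its point representation is $\boldsymbol{j}^0=(0,\dots,0)$, $\boldsymbol{j}^t=\boldsymbol{j}^{t-1}+\boldsymbol{e}_{\pi_t(1)}$ ($\boldsymbol{e}_i$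 the $i$-th unit vector of $\mathbb{R}^n$). For each $i$, let $T_i:\mathbb{R}^{d_i}\to\mathbb{R}^{d_i+1}$, $\lambda_{ij}=z_{ij}-z_{i,j+1}$ for $j=0,\dots,d_i$ with conventions $z_{i0}=1$, $z_{i,d_i+1}=0$; its inverse is $z_{ij}=\sum_{k=j}^{d_i}\lambda_{ik}$, $j\in[d_i]$. Let $P^{\sigma_i}\in\mathbb{R}^{(d_i+1)\times(d_i+1)}$ have entry $(j,k)$ equal to $1$ if $j=\sigma_i(k)$ and $0$ otherwise. Define $L^{\sigma_i}(\boldsymbol{z}'_i)=T_i^{-1}(P^{\sigma_i}T_i(\boldsymbol{z}'_i))$ and $L^\sigma(\boldsymbol{z}')=(L^{\sigma_1}(\boldsymbol{z}'_1),\dots,L^{\sigma_n}(\boldsymbol{z}'_n))$, an invertible affine map with inverse $(L^\sigma)^{-1}$. An MIP formulation of a set $S$ is a polyhedron with binary restrictions on some variables whose projection onto the original variables equals $S$; it is ideal if every vertex of the LP relaxation (binary restrictions dropped) has those variables binary. *)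

theory Defs
  imports "HOL-Analysis.Analysis"
begin

text \<open>Points of the extended space: (x, z, mu) with x i for i in [n],
  z i j for i in [n], j in [d i], and mu real.  Coordinates outside these
  index ranges are required to be zero (see mip_space).\<close>

type_synonym pt = "(nat \<Rightarrow> real) \<times> (nat \<Rightarrow> nat \<Rightarrow> real) \<times> real"

definition mip_space :: "nat \<Rightarrow> (nat \<Rightarrow> nat) \<Rightarrow> pt set" where
  "mip_space n d = {(x, z, mu). (\<forall>i. i \<notin> {1..n} \<longrightarrow> x i = 0) \<and>
      (\<forall>i j. \<not> (i \<in> {1..n} \<and> j \<in> {1..d i}) \<longrightarrow> z i j = 0)}"

definition lin_form :: "nat \<Rightarrow> (nat \<Rightarrow> nat) \<Rightarrow> pt \<Rightarrow> pt \<Rightarrow> real" where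
  "lin_form n d c q = (case c of (cx, cz, cm) \<Rightarrow> case q of (x, z, mu) \<Rightarrow>
      (\<Sum>i\<in>{1..n}. cx i * x i) + (\<Sum>i\<in>{1..n}. \<Sum>j\<in>{1..d i}. cz i j * z i j) + cm * mu)"

definition polyhedron_in :: "nat \<Rightarrow> (nat \<Rightarrow> nat) \<Rightarrow> pt set \<Rightarrow> bool" where
  "polyhedron_in n d Q \<longleftrightarrow> (\<exists>F. finite F \<and>
      Q = {q \<in> mip_space n d. \<forall>(c, b) \<in> F. lin_form n d c q \<le> b})"

definition comb :: "real \<Rightarrow> pt \<Rightarrow> pt \<Rightarrow> pt" where
  "comb u a b = (case a of (xa, za, ma) \<Rightarrow> case b of (xb, zb, mb) \<Rightarrow>
      (\<lambda>i. (1 - u) * xa i + u * xb i, \<lambda>i j. (1 - u) * za i j + u * zb i j,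
       (1 - u) * ma + u * mb))"

definition vertex_of :: "pt set \<Rightarrow> pt \<Rightarrow> bool" where
  "vertex_of Q q \<longleftrightarrow> q \<in> Q \<and>
     (\<forall>a\<in>Q. \<forall>b\<in>Q. \<forall>u. 0 < u \<and> u < 1 \<and> q = comb u a b \<longrightarrow> a = b)"

definition z_binary :: "nat \<Rightarrow> (nat \<Rightarrow> nat) \<Rightarrow> pt \<Rightarrow> bool" where
  "z_binary n d q = (case q of (x, z, mu) \<Rightarrow>
      (\<forall>i\<in>{1..n}. \<forall>j\<in>{1..d i}. z i j \<in> {0, 1}))"

definition MIP_formulation ::
  "nat \<Rightarrow> (nat \<Rightarrow> nat) \<Rightarrow> pt set \<Rightarrow> pt set \<Rightarrow> ((nat \<Rightarrow> real) \<times> real) set \<Rightarrow> bool" where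
  "MIP_formulation n d Q E S \<longleftrightarrow> polyhedron_in n d Q \<and>
      E = {q \<in> Q. z_binary n d q} \<and>
      (\<lambda>(x, z, mu). (x, mu)) ` E = S"

definition ideal_MIP_formulation ::
  "nat \<Rightarrow> (nat \<Rightarrow> nat) \<Rightarrow> pt set \<Rightarrow> pt set \<Rightarrow> ((nat \<Rightarrow> real) \<times> real) set \<Rightarrow> bool" where
  "ideal_MIP_formulation n d Q E S \<longleftrightarrow> MIP_formulation n d Q E S \<and>
      (\<forall>q. vertex_of Q q \<longrightarrow> z_binary n d q)"

definition supermodular_on :: "(nat \<Rightarrow> real) set \<Rightarrow> ((nat \<Rightarrow> real) \<Rightarrow> real) \<Rightarrow> bool" where
  "supermodular_on X g \<longleftrightarrow> (\<forall>x\<in>X. \<forall>y\<in>X.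
      g (\<lambda>i. max (x i) (y i)) + g (\<lambda>i. min (x i) (y i)) \<ge> g x + g y)"

definition vecn :: "nat \<Rightarrow> (nat \<Rightarrow> real) \<Rightarrow> (nat \<Rightarrow> real)" where
  "vecn n v = (\<lambda>i. if i \<in> {1..n} then v i else 0)"

definition dom_box :: "nat \<Rightarrow> (nat \<Rightarrow> real) \<Rightarrow> (nat \<Rightarrow> real) \<Rightarrow> (nat \<Rightarrow> real) set" where
  "dom_box n L U = {y. (\<forall>i\<in>{1..n}. L i \<le> y i \<and> y i \<le> U i) \<and> (\<forall>i. i \<notin> {1..n} \<longrightarrow> y i = 0)}"

definition gridX :: "nat \<Rightarrow> (nat \<Rightarrow> nat) \<Rightarrow> (nat \<Rightarrow> nat \<Rightarrow> real) \<Rightarrow> (nat \<Rightarrow> real) set" where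
  "gridX n d p = {x. (\<forall>i\<in>{1..n}. \<exists>j\<in>{0..d i}. x i = p i j) \<and> (\<forall>i. i \<notin> {1..n} \<longrightarrow> x i = 0)}"

definition hypograph ::
  "nat \<Rightarrow> (nat \<Rightarrow> nat) \<Rightarrow> (nat \<Rightarrow> nat \<Rightarrow> real) \<Rightarrow> (nat \<Rightarrow> real \<Rightarrow> real)
   \<Rightarrow> ((nat \<Rightarrow> real) \<Rightarrow> real) \<Rightarrow> ((nat \<Rightarrow> real) \<times> real) set" where
  "hypograph n d p f phi = {(x, mu). x \<in> gridX n d p \<and> mu \<le> phi (vecn n (\<lambda>i. f i (x i)))}"

definition psi ::
  "nat \<Rightarrow> (nat \<Rightarrow> nat \<Rightarrow> real) \<Rightarrow> (nat \<Rightarrow> real \<Rightarrow> real) \<Rightarrow> ((nat \<Rightarrow> real) \<Rightarrow> real)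
   \<Rightarrow> (nat \<Rightarrow> nat \<Rightarrow> nat) \<Rightarrow> (nat \<Rightarrow> nat) \<Rightarrow> real" where
  "psi n p f phi \<sigma> jj = phi (vecn n (\<lambda>i. f i (p i (\<sigma> i (jj i)))))"

definition in_B :: "nat \<Rightarrow> (nat \<Rightarrow> real) \<Rightarrow> real \<Rightarrow> (nat \<Rightarrow> real) \<Rightarrow> bool" where
  "in_B d ps xi zi \<longleftrightarrow>
     xi = ps 0 + (\<Sum>j\<in>{1..d}. (ps j - ps (j - 1)) * zi j) \<and>
     (d \<ge> 1 \<longrightarrow> zi 1 \<le> 1 \<and> zi d \<ge> 0) \<and> (\<forall>j\<in>{1..<d}. zi j \<ge> zi (Suc j))"

definition Tmap :: "nat \<Rightarrow> (nat \<Rightarrow> real) \<Rightarrow> (nat \<Rightarrow> real)" where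
  "Tmap d zi = (let ze = (\<lambda>j. if j = 0 then 1 else if j \<le> d then zi j else 0)
      in (\<lambda>j. if j \<le> d then ze j - ze (Suc j) else 0))"

definition Tinv :: "nat \<Rightarrow> (nat \<Rightarrow> real) \<Rightarrow> (nat \<Rightarrow> real)" where
  "Tinv d lam = (\<lambda>j. if j \<in> {1..d} then (\<Sum>k\<in>{j..d}. lam k) else 0)"

definition Pmul :: "nat \<Rightarrow> (nat \<Rightarrow> nat) \<Rightarrow> (nat \<Rightarrow> real) \<Rightarrow> (nat \<Rightarrow> real)" where
  "Pmul d s lam = (\<lambda>j. if j \<le> d then (\<Sum>k\<in>{0..d}. (if j = s k then 1 else 0) * lam k) else 0)"

definition Lsig :: "nat \<Rightarrow> (nat \<Rightarrow> nat) \<Rightarrow> (nat \<Rightarrow> nat \<Rightarrow> nat) \<Rightarrow> (nat \<Rightarrow> nat \<Rightarrow> real) \<Rightarrow> (nat \<Rightarrow> nat \<Rightarrow> real)" where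
  "Lsig n d \<sigma> z' = (\<lambda>i. if i \<in> {1..n} then Tinv (d i) (Pmul (d i) (\<sigma> i) (Tmap (d i) (z' i)))
                        else (\<lambda>_. 0))"

definition staircase :: "nat \<Rightarrow> (nat \<Rightarrow> nat) \<Rightarrow> (nat \<Rightarrow> nat \<times> nat) \<Rightarrow> bool" where
  "staircase n d \<pi> \<longleftrightarrow> (let N = (\<Sum>i\<in>{1..n}. d i) in
     (\<forall>t\<in>{1..N}. fst (\<pi> t) \<in> {1..n}) \<and>
     (\<forall>i\<in>{1..n}. card {t\<in>{1..N}. fst (\<pi> t) = i} = d i) \<and>
     (\<forall>t\<in>{1..N}. snd (\<pi> t) = card {s\<in>{1..t}. fst (\<pi> s) = fst (\<pi> t)}))"

fun jpt :: "(nat \<Rightarrow> nat \<times> nat) \<Rightarrow> nat \<Rightarrow> (nat \<Rightarrow> nat)" where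
  "jpt \<pi> 0 = (\<lambda>i. 0)"
| "jpt \<pi> (Suc t) = (\<lambda>i. jpt \<pi> t i + (if i = fst (\<pi> (Suc t)) then 1 else 0))"

definition E_relax ::
  "nat \<Rightarrow> (nat \<Rightarrow> nat) \<Rightarrow> (nat \<Rightarrow> nat \<Rightarrow> real) \<Rightarrow> (nat \<Rightarrow> real \<Rightarrow> real)
   \<Rightarrow> ((nat \<Rightarrow> real) \<Rightarrow> real) \<Rightarrow> (nat \<Rightarrow> nat \<Rightarrow> nat) \<Rightarrow> pt set" where
  "E_relax n d p f phi \<sigma> = {(x, z, mu). (x, z, mu) \<in> mip_space n d \<and>
      (\<forall>i\<in>{1..n}. in_B (d i) (p i) (x i) (z i)) \<and>
      (\<exists>z'. Lsig n d \<sigma> z' = z \<and>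
        (\<forall>\<pi>. staircase n d \<pi> \<longrightarrow>
           mu \<le> psi n p f phi \<sigma> (jpt \<pi> 0) +
             (\<Sum>t\<in>{1..(\<Sum>i\<in>{1..n}. d i)}.
                (psi n p f phi \<sigma> (jpt \<pi> t) - psi n p f phi \<sigma> (jpt \<pi> (t - 1)))
                * z' (fst (\<pi> t)) (snd (\<pi> t)))))}"

definition E_set ::
  "nat \<Rightarrow> (nat \<Rightarrow> nat) \<Rightarrow> (nat \<Rightarrow> nat \<Rightarrow> real) \<Rightarrow> (nat \<Rightarrow> real \<Rightarrow> real)
   \<Rightarrow> ((nat \<Rightarrow> real) \<Rightarrow> real) \<Rightarrow> (nat \<Rightarrow> nat \<Rightarrow> nat) \<Rightarrow> pt set" where
  "E_set n d p f phi \<sigma> = {q \<in> E_relax n d p f phi \<sigma>. z_binary n d q}"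

end

theory Submission
  imports Defs
begin

definition perm_pair :: "nat \<Rightarrow> (nat \<Rightarrow> nat) \<Rightarrow> (nat \<Rightarrow> nat) \<Rightarrow> bool" where
  "perm_pair d s t \<longleftrightarrow> (\<forall>k\<le>d. s k \<le> d \<and> t k \<le> d \<and> s (t k) = k \<and> t (s k) = k)"

lemma perm_pair_sym: "perm_pair d s t \<Longrightarrow> perm_pair d t s"
  unfolding perm_pair_def by blast

definition Lb :: "nat \<Rightarrow> (nat \<Rightarrow> nat) \<Rightarrow> (nat \<Rightarrow> real) \<Rightarrow> (nat \<Rightarrow> real)" where
  "Lb d s w = Tinv d (Pmul d s (Tmap d w))"

definition inD :: "nat \<Rightarrow> (nat \<Rightarrow> real) \<Rightarrow> bool" where
  "inD d w \<longleftrightarrow> (d \<ge> 1 \<longrightarrow> w 1 \<le> 1 \<and> w d \<ge> 0) \<and> (\<forall>j\<in>{1..<d}. w j \<ge> w (Suc j))"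

lemma tele: fixes f :: "nat \<Rightarrow> real" assumes "m \<le> Suc n"
  shows "(\<Sum>i = m..n. f i - f (Suc i)) = f m - f (Suc n)"
proof -
  have "(\<Sum>i = m..n. f i - f (Suc i)) = - (\<Sum>i = m..n. f (Suc i) - f i)"
    by (simp add: sum_negf[symmetric])
  also have "\<dots> = f m - f (Suc n)" using sum_Suc_diff[OF assms, of f] by simp
  finally show ?thesis .
qed

lemma Tmap_eq: "j \<le> d \<Longrightarrow> Tmap d w j =
   (if j = 0 then 1 else if j \<le> d then w j else 0) - (if Suc j \<le> d then w (Suc j) else 0)"
  by (simp add: Tmap_def Let_def)

lemma Tmap_sum: "(\<Sum>j\<in>{0..d}. Tmap d w j) = 1"
proof -
  define ze where "ze = (\<lambda>j. if j = 0 then 1 else if j \<le> d then w j else (0::real))"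
  have "(\<Sum>j\<in>{0..d}. Tmap d w j) = (\<Sum>j\<in>{0..d}. ze j - ze (Suc j))"
    by (rule sum.cong) (auto simp: Tmap_def Let_def ze_def)
  also have "\<dots> = ze 0 - ze (Suc d)" by (rule tele) simp
  also have "\<dots> = 1" by (simp add: ze_def)
  finally show ?thesis .
qed

lemma perm_pairD: assumes "perm_pair d s t" "k \<le> d"
  shows "s k \<le> d" "t k \<le> d" "s (t k) = k" "t (s k) = k"
  using assms unfolding perm_pair_def by blast+

lemma Pmul_eq: assumes "perm_pair d s t" "j \<le> d" shows "Pmul d s lam j = lam (t j)"
proof -
  have iff: "j = s k \<longleftrightarrow> k = t j" if "k \<le> d" for k
    using perm_pairD[OF assms(1) that] perm_pairD[OF assms(1) assms(2)] by metis
  have "Pmul d s lam j = (\<Sum>k\<in>{0..d}. (if j = s k then 1 else 0) * lam k)"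
    unfolding Pmul_def using assms(2) by simp
  also have "\<dots> = (\<Sum>k\<in>{0..d}. if k = t j then lam k else 0)"
    by (rule sum.cong) (auto simp: iff)
  also have "\<dots> = lam (t j)" using perm_pairD[OF assms] by (simp add: sum.delta)
  finally show ?thesis .
qed

lemma sum_perm: assumes "perm_pair d s t" shows "(\<Sum>j\<in>{0..d}. lam (t j)) = (\<Sum>j\<in>{0..d}. lam j)"
  by (rule sum.reindex_bij_witness[where i=s and j=t]) (use perm_pairD[OF assms] in auto)

lemma TmapTinv: assumes "(\<Sum>k\<in>{0..d}. lam k) = 1" "j \<le> d" shows "Tmap d (Tinv d lam) j = lam j"
proof -
  have hd: "(\<Sum>k\<in>{j..d}. lam k) = lam j + (\<Sum>k\<in>{Suc j..d}. lam k)" if "j \<le> d" for j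
    using sum.head[OF that, of lam] by (simp add: atLeastSucAtMost_greaterThanAtMost)
  show ?thesis
  proof (cases "j = 0")
    case True
    then show ?thesis using assms hd[of 0]
      by (auto simp: Tmap_def Tinv_def Let_def)
  next
    case False
    then show ?thesis using assms hd[of j]
      by (auto simp: Tmap_def Tinv_def Let_def)
  qed
qed

lemma TinvTmap: assumes "j \<in> {1..d}" shows "Tinv d (Tmap d w) j = w j"
proof -
  define ze where "ze = (\<lambda>j. if j = 0 then 1 else if j \<le> d then w j else (0::real))"
  have "Tinv d (Tmap d w) j = (\<Sum>k\<in>{j..d}. ze k - ze (Suc k))"
    using assms by (auto simp: Tinv_def Tmap_def Let_def ze_def intro!: sum.cong)
  also have "\<dots> = ze j - ze (Suc d)" by (rule tele) (use assms in auto)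
  also have "\<dots> = w j" using assms by (simp add: ze_def)
  finally show ?thesis .
qed

lemma Tinv_cong: "(\<And>k. k \<le> d \<Longrightarrow> a k = b k) \<Longrightarrow> Tinv d a j = Tinv d b j"
  unfolding Tinv_def by (auto intro!: sum.cong)

lemma Lb_sum: assumes "perm_pair d s t" shows "(\<Sum>k\<in>{0..d}. Pmul d s (Tmap d w) k) = 1"
proof -
  have "(\<Sum>k\<in>{0..d}. Pmul d s (Tmap d w) k) = (\<Sum>k\<in>{0..d}. Tmap d w (t k))"
    by (rule sum.cong) (use Pmul_eq[OF assms] in auto)
  also have "\<dots> = 1" using sum_perm[OF assms, of "Tmap d w"] Tmap_sum[of d w] by simp
  finally show ?thesis .
qed

lemma Tmap_Lb: assumes "perm_pair d s t" "k \<le> d" shows "Tmap d (Lb d s w) k = Tmap d w (t k)"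
  unfolding Lb_def using TmapTinv[OF Lb_sum[OF assms(1)] assms(2)] Pmul_eq[OF assms] by simp

lemma Lb_inv: assumes "perm_pair d s t" "j \<in> {1..d}" shows "Lb d t (Lb d s w) j = w j"
proof -
  have pt: "perm_pair d t s" using perm_pair_sym[OF assms(1)] .
  have "Lb d t (Lb d s w) j = Tinv d (Tmap d w) j"
    unfolding Lb_def[of d t]
  proof (rule Tinv_cong)
    fix k assume k: "k \<le> d"
    have "Pmul d t (Tmap d (Lb d s w)) k = Tmap d (Lb d s w) (s k)" using Pmul_eq[OF pt k] .
    also have "\<dots> = Tmap d w (t (s k))" using Tmap_Lb[OF assms(1) perm_pairD(1)[OF assms(1) k]] .
    also have "\<dots> = Tmap d w k" using perm_pairD[OF assms(1) k] by simp
    finally show "Pmul d t (Tmap d (Lb d s w)) k = Tmap d w k" .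
  qed
  also have "\<dots> = w j" using TinvTmap[OF assms(2)] .
  finally show ?thesis .
qed

lemma inD_Tmap: assumes "1 \<le> d" shows "inD d w \<longleftrightarrow> (\<forall>j\<le>d. 0 \<le> Tmap d w j)"
proof
  assume h: "inD d w"
  show "\<forall>j\<le>d. 0 \<le> Tmap d w j"
  proof (intro allI impI)
    fix j assume j: "j \<le> d"
    consider "j = 0" | "1 \<le> j" "j < d" | "j = d" "j \<ge> 1" using j by linarith
    then show "0 \<le> Tmap d w j"
    proof cases
      case 1 then show ?thesis using h assms by (simp add: Tmap_eq inD_def)
    next
      case 2 then show ?thesis using h assms by (simp add: Tmap_eq inD_def)
    next
      case 3 then show ?thesis using h assms by (simp add: Tmap_eq inD_def)
    qed
  qed
next
  assume h: "\<forall>j\<le>d. 0 \<le> Tmap d w j"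
  have a: "w 1 \<le> 1" using h[rule_format, of 0] assms by (simp add: Tmap_eq)
  have b: "w d \<ge> 0" using h[rule_format, of d] assms by (simp add: Tmap_eq)
  have c: "\<forall>j\<in>{1..<d}. w j \<ge> w (Suc j)"
  proof
    fix j assume "j \<in> {1..<d}"
    then show "w j \<ge> w (Suc j)" using h[rule_format, of j] by (simp add: Tmap_eq)
  qed
  show "inD d w" using a b c by (simp add: inD_def)
qed

lemma inD_Lb: assumes "perm_pair d s t" "1 \<le> d" shows "inD d (Lb d s w) \<longleftrightarrow> inD d w"
proof -
  have "inD d (Lb d s w) \<longleftrightarrow> (\<forall>j\<le>d. 0 \<le> Tmap d w (t j))"
    using inD_Tmap[OF assms(2)] Tmap_Lb[OF assms(1)] by auto
  also have "\<dots> \<longleftrightarrow> (\<forall>k\<le>d. 0 \<le> Tmap d w k)"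
    using perm_pairD[OF assms(1)] by metis
  also have "\<dots> \<longleftrightarrow> inD d w" using inD_Tmap[OF assms(2)] by simp
  finally show ?thesis .
qed

lemma sum_lin: "(\<Sum>k\<in>S. (1 - u) * F k + u * G k) = (1 - u) * sum F S + u * (sum G S :: real)"
  by (simp add: sum.distrib sum_distrib_left)

lemma Lb_comb: "Lb d s (\<lambda>j. (1 - u) * a j + u * b j) j = (1 - u) * Lb d s a j + u * Lb d s b j"
proof -
  define c where "c = (\<lambda>j. (1 - u) * a j + u * b j)"
  have tm: "Tmap d c k = (1 - u) * Tmap d a k + u * Tmap d b k" for k
    by (simp add: Tmap_def Let_def algebra_simps c_def)
  define P where "P = Pmul d s (Tmap d c)"
  have pm: "P k = (1 - u) * Pmul d s (Tmap d a) k + u * Pmul d s (Tmap d b) k" for k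
  proof -
    have "(\<Sum>m\<in>{0..d}. (if k = s m then 1 else 0) * Tmap d c m)
       = (\<Sum>m\<in>{0..d}. (1 - u) * ((if k = s m then 1 else 0) * Tmap d a m) + u * ((if k = s m then 1 else 0) * Tmap d b m))"
      by (rule sum.cong) (simp_all add: tm algebra_simps)
    then show ?thesis unfolding Pmul_def P_def by (simp add: sum_lin)
  qed
  have "(\<Sum>k\<in>{j..d}. P k)
     = (\<Sum>k\<in>{j..d}. (1 - u) * Pmul d s (Tmap d a) k + u * Pmul d s (Tmap d b) k)"
    by (rule sum.cong) (simp_all add: pm)
  then have "Tinv d P j = (1 - u) * Lb d s a j + u * Lb d s b j"
    unfolding Lb_def Tinv_def by (simp add: sum_lin)
  then show ?thesis unfolding Lb_def P_def c_def .
qed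

lemma Lb_onehot: assumes "perm_pair d s t" "k \<le> d" "j \<in> {1..d}"
  shows "Lb d s (\<lambda>j. of_bool (j \<le> k)) j = of_bool (j \<le> s k)"
proof -
  have tm: "Tmap d (\<lambda>j. of_bool (j \<le> k)) m = of_bool (m = k)" if "m \<le> d" for m
    using that assms(2) by (auto simp: Tmap_def Let_def)
  have "Lb d s (\<lambda>j. of_bool (j \<le> k)) j = (\<Sum>m\<in>{j..d}. Pmul d s (Tmap d (\<lambda>j. of_bool (j \<le> k))) m)"
    using assms(3) by (simp add: Lb_def Tinv_def)
  also have "\<dots> = (\<Sum>m\<in>{j..d}. if m = s k then 1 else 0)"
  proof (rule sum.cong)
    fix m assume "m \<in> {j..d}"
    then have m: "m \<le> d" by simp
    have "Pmul d s (Tmap d (\<lambda>j. of_bool (j \<le> k))) m = of_bool (t m = k)"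
    proof -
      have "t m \<le> d" using perm_pairD[OF assms(1) m] by blast
      then show ?thesis by (simp add: Pmul_eq[OF assms(1) m] tm)
    qed
    also have "\<dots> = (if m = s k then 1 else 0)" using perm_pairD[OF assms(1) m] perm_pairD[OF assms(1,2)] by auto
    finally show "Pmul d s (Tmap d (\<lambda>j. of_bool (j \<le> k))) m = (if m = s k then 1 else 0)" .
  qed simp
  also have "\<dots> = of_bool (j \<le> s k)" using perm_pairD[OF assms(1,2)] assms(3)
    by (simp add: sum.delta)
  finally show ?thesis .
qed

lemma Lb_zero: "j \<notin> {1..d} \<Longrightarrow> Lb d s w j = 0"
  unfolding Lb_def Tinv_def by auto

lemma Lb_cong: "(\<And>j. j \<in> {1..d} \<Longrightarrow> a j = b j) \<Longrightarrow> Lb d s a = Lb d s b"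
proof -
  assume h: "\<And>j. j \<in> {1..d} \<Longrightarrow> a j = b j"
  have "Tmap d a = Tmap d b" using h by (auto simp: Tmap_def Let_def fun_eq_iff)
  then show ?thesis by (simp add: Lb_def)
qed


definition NN :: "nat \<Rightarrow> (nat \<Rightarrow> nat) \<Rightarrow> nat" where
  "NN n d = (\<Sum>i\<in>{1..n}. d i)"

definition Pset :: "nat \<Rightarrow> (nat \<Rightarrow> nat) \<Rightarrow> (nat \<times> nat) set" where
  "Pset n d = Sigma {1..n} (\<lambda>i. {1..d i})"

definition Api :: "nat \<Rightarrow> (nat \<Rightarrow> nat) \<Rightarrow> ((nat \<Rightarrow> nat) \<Rightarrow> real) \<Rightarrow> (nat \<Rightarrow> nat \<times> nat)
   \<Rightarrow> (nat \<Rightarrow> nat \<Rightarrow> real) \<Rightarrow> real" where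
  "Api n d Ps \<pi> w = Ps (jpt \<pi> 0) +
     (\<Sum>t\<in>{1..NN n d}. (Ps (jpt \<pi> t) - Ps (jpt \<pi> (t - 1))) * w (fst (\<pi> t)) (snd (\<pi> t)))"

lemma finite_Pset: "finite (Pset n d)" by (simp add: Pset_def)

lemma card_Pset: "card (Pset n d) = NN n d"
  by (simp add: Pset_def NN_def)

lemma jpt_card: "jpt \<pi> t i = card {s\<in>{1..t}. fst (\<pi> s) = i}"
proof (induction t)
  case 0 then show ?case by simp
next
  case (Suc t)
  have "{s\<in>{1..Suc t}. fst (\<pi> s) = i} = {s\<in>{1..t}. fst (\<pi> s) = i} \<union>
        (if fst (\<pi> (Suc t)) = i then {Suc t} else {})"
    by (auto simp: le_Suc_eq)
  then show ?case using Suc by (simp add: card_insert_if)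
qed

lemma stair_unf: "staircase n d \<pi> \<longleftrightarrow> (\<forall>t\<in>{1..NN n d}. fst (\<pi> t) \<in> {1..n}) \<and>
     (\<forall>i\<in>{1..n}. card {t\<in>{1..NN n d}. fst (\<pi> t) = i} = d i) \<and>
     (\<forall>t\<in>{1..NN n d}. snd (\<pi> t) = card {s\<in>{1..t}. fst (\<pi> s) = fst (\<pi> t)})"
  unfolding staircase_def NN_def Let_def by (rule refl)

lemma stairD:
  assumes "staircase n d \<pi>" "t \<in> {1..NN n d}"
  shows "fst (\<pi> t) \<in> {1..n}" "snd (\<pi> t) = card {s\<in>{1..t}. fst (\<pi> s) = fst (\<pi> t)}"
  using assms unfolding stair_unf by blast+

lemma stair_card: assumes "staircase n d \<pi>" "i \<in> {1..n}"
  shows "card {t\<in>{1..NN n d}. fst (\<pi> t) = i} = d i"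
  using assms unfolding stair_unf by blast

lemma jpt_le: assumes "staircase n d \<pi>" "t \<le> NN n d" "i \<in> {1..n}"
  shows "jpt \<pi> t i \<le> d i"
proof -
  have "jpt \<pi> t i \<le> card {s\<in>{1..NN n d}. fst (\<pi> s) = i}"
    unfolding jpt_card by (rule card_mono) (use assms in auto)
  then show ?thesis using stair_card[OF assms(1,3)] by simp
qed

lemma jpt_N: assumes "staircase n d \<pi>" "i \<in> {1..n}" shows "jpt \<pi> (NN n d) i = d i"
  using stair_card[OF assms] by (simp add: jpt_card)

lemma jpt_Suc: "jpt \<pi> (Suc t) = (\<lambda>i. jpt \<pi> t i + (if i = fst (\<pi> (Suc t)) then 1 else 0))"
  by simp

lemma stair_snd: assumes "staircase n d \<pi>" "Suc t \<in> {1..NN n d}"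
  shows "snd (\<pi> (Suc t)) = Suc (jpt \<pi> t (fst (\<pi> (Suc t))))"
  using stairD(2)[OF assms] jpt_card[of \<pi> "Suc t" "fst (\<pi> (Suc t))"] by simp

lemma stair_inP: assumes "staircase n d \<pi>" "t \<in> {1..NN n d}"
  shows "\<pi> t \<in> Pset n d"
proof -
  obtain t' where t': "t = Suc t'" using assms(2) by (cases t) auto
  have "snd (\<pi> t) = Suc (jpt \<pi> t' (fst (\<pi> t)))" using stair_snd[OF assms(1)] assms(2) t' by simp
  also have "\<dots> = jpt \<pi> t (fst (\<pi> t))" using t' by simp
  also have "\<dots> \<le> d (fst (\<pi> t))" by (rule jpt_le[OF assms(1)]) (use assms stairD(1)[OF assms] in auto)
  finally have "snd (\<pi> t) \<le> d (fst (\<pi> t))" .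
  moreover have "snd (\<pi> t) \<ge> 1" using stair_snd[OF assms(1)] assms(2) t' by simp
  ultimately show ?thesis using stairD(1)[OF assms] by (cases "\<pi> t") (auto simp: Pset_def)
qed

lemma lower:
  fixes Ps :: "(nat \<Rightarrow> nat) \<Rightarrow> real"
  assumes SM: "\<And>a b. (\<forall>i\<in>{1..n}. a i \<le> d i \<and> b i \<le> d i) \<Longrightarrow>
                 Ps a + Ps b \<le> Ps (\<lambda>i. max (a i) (b i)) + Ps (\<lambda>i. min (a i) (b i))"
    and CG: "\<And>a b. (\<forall>i\<in>{1..n}. a i = b i) \<Longrightarrow> Ps a = Ps b"
    and st: "staircase n d \<pi>" and g: "\<forall>i\<in>{1..n}. g i \<le> d i"
  shows "Ps g \<le> Api n d Ps \<pi> (\<lambda>i j. of_bool (j \<le> g i))"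
proof -
  let ?J = "jpt \<pi>"
  let ?Y = "\<lambda>t i. min (jpt \<pi> t i) (g i)"
  let ?N = "NN n d"
  have claim: "Ps (?Y t) \<le> Ps (?J 0) + (\<Sum>s\<in>{1..t}. (Ps (?J s) - Ps (?J (s - 1))) * of_bool (snd (\<pi> s) \<le> g (fst (\<pi> s))))"
    if "t \<le> ?N" for t
    using that
  proof (induction t)
    case 0
    have "?Y 0 = ?J 0" by (simp add: fun_eq_iff)
    then show ?case by simp
  next
    case (Suc t)
    define i0 where "i0 = fst (\<pi> (Suc t))"
    define k where "k = snd (\<pi> (Suc t))"
    have tN: "Suc t \<in> {1..?N}" using Suc.prems by simp
    have i0: "i0 \<in> {1..n}" using stairD(1)[OF st tN] by (simp add: i0_def)
    have k: "k = Suc (?J t i0)" using stair_snd[OF st tN] by (simp add: k_def i0_def)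
    have Jsuc: "?J (Suc t) = (\<lambda>i. ?J t i + (if i = i0 then 1 else 0))" by (simp add: i0_def)
    have IH: "Ps (?Y t) \<le> Ps (?J 0) + (\<Sum>s\<in>{1..t}. (Ps (?J s) - Ps (?J (s - 1))) * of_bool (snd (\<pi> s) \<le> g (fst (\<pi> s))))"
      using Suc by simp
    have bJ1: "\<forall>i\<in>{1..n}. ?J t i \<le> d i"
      using jpt_le[OF st] Suc.prems by simp
    have bJ2: "\<forall>i\<in>{1..n}. ?J (Suc t) i \<le> d i"
      using jpt_le[OF st Suc.prems] by blast
    note bJ = bJ1 bJ2
    show ?case
    proof (cases "k \<le> g i0")
      case True
      have maxe: "(\<lambda>i. max (?Y (Suc t) i) (?J t i)) = ?J (Suc t)"
        using True k by (auto simp: fun_eq_iff Jsuc simp del: jpt.simps)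
      have mine: "(\<lambda>i. min (?Y (Suc t) i) (?J t i)) = ?Y t"
        using True k by (auto simp: fun_eq_iff Jsuc simp del: jpt.simps)
      have "Ps (?Y (Suc t)) + Ps (?J t) \<le> Ps (?J (Suc t)) + Ps (?Y t)"
        using SM[of "?Y (Suc t)" "?J t"] bJ maxe mine by force
      moreover have "(\<Sum>s\<in>{1..Suc t}. (Ps (?J s) - Ps (?J (s - 1))) * of_bool (snd (\<pi> s) \<le> g (fst (\<pi> s))))
          = (\<Sum>s\<in>{1..t}. (Ps (?J s) - Ps (?J (s - 1))) * of_bool (snd (\<pi> s) \<le> g (fst (\<pi> s))))
            + (Ps (?J (Suc t)) - Ps (?J t))"
        using True by (simp add: k_def i0_def)
      ultimately show ?thesis using IH by linarith
    next
      case False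
      have Yeq: "?Y (Suc t) = ?Y t" using False k by (auto simp: fun_eq_iff Jsuc simp del: jpt.simps)
      then have "Ps (?Y (Suc t)) = Ps (?Y t)" by (simp only:)
      moreover have "(\<Sum>s\<in>{1..Suc t}. (Ps (?J s) - Ps (?J (s - 1))) * of_bool (snd (\<pi> s) \<le> g (fst (\<pi> s))))
          = (\<Sum>s\<in>{1..t}. (Ps (?J s) - Ps (?J (s - 1))) * of_bool (snd (\<pi> s) \<le> g (fst (\<pi> s))))"
        using False by (simp add: k_def i0_def)
      ultimately show ?thesis using IH by linarith
    qed
  qed
  have "Ps g = Ps (?Y ?N)"
    by (rule CG) (use jpt_N[OF st] g in auto)
  also have "\<dots> \<le> Api n d Ps \<pi> (\<lambda>i j. of_bool (j \<le> g i))"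
    using claim[of ?N] by (simp add: Api_def)
  finally show ?thesis .
qed


lemma dec_chain:
  fixes v :: "nat \<Rightarrow> real"
  assumes "\<forall>j\<in>{1..<D}. v (Suc j) \<le> v j" "1 \<le> j" "j \<le> j'" "j' \<le> D"
  shows "v j' \<le> v j"
  using assms(3,4)
proof (induction j' rule: dec_induct)
  case base then show ?case by simp
next
  case (step m)
  then have "v (Suc m) \<le> v m" using assms(1,2) by auto
  then show ?case using step by simp
qed

lemma sorted_stair:
  fixes w :: "nat \<Rightarrow> nat \<Rightarrow> real"
  assumes dec: "\<forall>i\<in>{1..n}. \<forall>j\<in>{1..<d i}. w i (Suc j) \<le> w i j"
  shows "\<exists>\<pi> pos. staircase n d \<pi> \<and>
     (\<forall>q\<in>Pset n d. pos q \<in> {1..NN n d} \<and> \<pi> (pos q) = q) \<and>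
     (\<forall>t\<in>{1..NN n d}. \<pi> t \<in> Pset n d \<and> pos (\<pi> t) = t) \<and>
     (\<forall>s t. 1 \<le> s \<longrightarrow> s \<le> t \<longrightarrow> t \<le> NN n d \<longrightarrow> w (fst (\<pi> t)) (snd (\<pi> t)) \<le> w (fst (\<pi> s)) (snd (\<pi> s))) \<and>
     (\<forall>t\<le>NN n d. \<forall>i j. (i, j) \<in> Pset n d \<longrightarrow> (j \<le> jpt \<pi> t i \<longleftrightarrow> pos (i, j) \<le> t))"
proof -
  define P where "P = Pset n d"
  define N where "N = NN n d"
  have finP: "finite P" by (simp add: P_def finite_Pset)
  have cardP: "card P = N" by (simp add: P_def N_def card_Pset)
  define lt where "lt = (\<lambda>q q'. w (fst q) (snd q) > w (fst q') (snd q') \<or>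
      (w (fst q) (snd q) = w (fst q') (snd q') \<and> (snd q < snd q' \<or> (snd q = snd q' \<and> fst q < fst q'))))"
  have irr: "\<not> lt q q" for q by (auto simp: lt_def)
  have trans: "lt a c" if "lt a b" "lt b c" for a b c
    using that unfolding lt_def by (smt (verit) less_trans)
  have tot: "lt a b \<or> lt b a" if "a \<noteq> b" for a b
  proof -
    have "fst a \<noteq> fst b \<or> snd a \<noteq> snd b" using that by (simp add: prod_eq_iff)
    then show ?thesis unfolding lt_def by (smt (verit) linorder_neqE_nat)
  qed
  define rank where "rank = (\<lambda>q. card {q'\<in>P. lt q' q})"
  have rank_lt: "rank a < rank b" if "a \<in> P" "b \<in> P" "lt a b" for a b
  proof -
    have sub: "{q'\<in>P. lt q' a} \<subseteq> {q'\<in>P. lt q' b}"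
      using trans[OF _ that(3)] by blast
    have "a \<in> {q'\<in>P. lt q' b}" "a \<notin> {q'\<in>P. lt q' a}" using that irr by auto
    then have "{q'\<in>P. lt q' a} \<subset> {q'\<in>P. lt q' b}" using sub by blast
    then show ?thesis unfolding rank_def by (rule psubset_card_mono[rotated]) (simp add: finP)
  qed
  have rank_bound: "rank q < N" if "q \<in> P" for q
  proof -
    have "{q'\<in>P. lt q' q} \<subseteq> P - {q}" using irr by blast
    then have "rank q \<le> card (P - {q})" unfolding rank_def by (rule card_mono[rotated]) (simp add: finP)
    also have "\<dots> = N - 1" using that finP cardP by simp
    also have "\<dots> < N"
    proof -
      have "P \<noteq> {}" using that by blast
      then have "N > 0" using finP cardP card_gt_0_iff by metis
      then show ?thesis by simp
    qed
    finally show ?thesis .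
  qed
  have inj: "inj_on rank P"
  proof (rule inj_onI)
    fix a b assume ab: "a \<in> P" "b \<in> P" "rank a = rank b"
    show "a = b"
    proof (rule ccontr)
      assume "a \<noteq> b"
      then have "lt a b \<or> lt b a" by (rule tot)
      then show False using rank_lt[of a b] rank_lt[of b a] ab by auto
    qed
  qed
  have img: "rank ` P = {0..<N}"
  proof (rule card_subset_eq)
    show "rank ` P \<subseteq> {0..<N}" using rank_bound by auto
    show "card (rank ` P) = card {0..<N}" using card_image[OF inj] cardP by simp
  qed simp
  define pos where "pos = (\<lambda>q. Suc (rank q))"
  define \<pi> where "\<pi> = (\<lambda>t. inv_into P rank (t - 1))"
  have F1: "pos q \<in> {1..N} \<and> \<pi> (pos q) = q" if "q \<in> P" for q
    using that rank_bound[OF that] inj by (simp add: pos_def \<pi>_def)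
  have F2: "\<pi> t \<in> P \<and> pos (\<pi> t) = t" if "t \<in> {1..N}" for t
  proof -
    have tt: "t - 1 \<in> rank ` P" using that img by auto
    have "\<pi> t \<in> P" unfolding \<pi>_def by (rule inv_into_into[OF tt])
    moreover have "rank (\<pi> t) = t - 1" unfolding \<pi>_def by (rule f_inv_into_f[OF tt])
    ultimately show ?thesis using that by (simp add: pos_def)
  qed
  have F3: "pos a < pos b" if "a \<in> P" "b \<in> P" "lt a b" for a b
    using rank_lt[OF that] by (simp add: pos_def)
  have F4: "lt (i, j) (i, j')" if "(i, j) \<in> P" "(i, j') \<in> P" "j < j'" for i j j'
  proof -
    have "i \<in> {1..n}" "1 \<le> j" "j' \<le> d i" using that by (auto simp: P_def Pset_def)
    then have "w i j' \<le> w i j" using dec_chain[of "d i" "w i" j j'] dec that(3) by auto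
    then show ?thesis using that(3) unfolding lt_def by auto
  qed
  have G1: "pos (i, j'') \<le> pos (i, j)" if "(i, j) \<in> P" "j'' \<in> {1..j}" for i j j''
  proof -
    have "(i, j'') \<in> P" using that by (auto simp: P_def Pset_def)
    then show ?thesis using that F3 F4 by (cases "j'' = j") (auto simp: less_imp_le)
  qed
  have G2: "pos (i, j) \<le> s" if "s \<in> {1..N}" "fst (\<pi> s) = i" "(i, j) \<in> P" "j \<le> snd (\<pi> s)" for s i j
  proof -
    have ps: "\<pi> s = (i, snd (\<pi> s))" "\<pi> s \<in> P" "pos (\<pi> s) = s" using F2[OF that(1)] that(2) by auto
    show ?thesis
    proof (cases "j = snd (\<pi> s)")
      case True then show ?thesis using ps by simp
    next
      case False
      then have "lt (i, j) (\<pi> s)" using F4[OF that(3), of "snd (\<pi> s)"] ps that(4) by simp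
      then show ?thesis using F3[OF that(3) ps(2)] ps by simp
    qed
  qed
  have injpos: "inj_on pos P" using inj unfolding pos_def inj_on_def by simp
  have cardB: "card (pos ` ({i} \<times> {1..j})) = j" if "i \<in> {1..n}" "j \<le> d i" for i j
  proof -
    have "{i} \<times> {1..j} \<subseteq> P" using that by (auto simp: P_def Pset_def)
    then have "inj_on pos ({i} \<times> {1..j})" using injpos inj_on_subset by blast
    then show ?thesis by (simp add: card_image card_cartesian_product_singleton)
  qed
  have S2: "card {t\<in>{1..N}. fst (\<pi> t) = i} = d i" if "i \<in> {1..n}" for i
  proof -
    have "{t\<in>{1..N}. fst (\<pi> t) = i} = pos ` ({i} \<times> {1..d i})"
    proof
      show "{t\<in>{1..N}. fst (\<pi> t) = i} \<subseteq> pos ` ({i} \<times> {1..d i})"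
      proof
        fix t assume t: "t \<in> {t\<in>{1..N}. fst (\<pi> t) = i}"
        then have "\<pi> t \<in> P" "pos (\<pi> t) = t" using F2 by auto
        then show "t \<in> pos ` ({i} \<times> {1..d i})" using t
          by (cases "\<pi> t") (force simp: P_def Pset_def)
      qed
      show "pos ` ({i} \<times> {1..d i}) \<subseteq> {t\<in>{1..N}. fst (\<pi> t) = i}"
        using F1 that by (auto simp: P_def Pset_def)
    qed
    then show ?thesis using cardB[OF that] by simp
  qed
  have S3: "snd (\<pi> t) = card {s\<in>{1..t}. fst (\<pi> s) = fst (\<pi> t)}" if t: "t \<in> {1..N}" for t
  proof -
    obtain i j where ij: "\<pi> t = (i, j)" by (cases "\<pi> t")
    have ijP: "(i, j) \<in> P" and post: "pos (i, j) = t" using F2[OF t] ij by auto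
    have i: "i \<in> {1..n}" "j \<le> d i" using ijP by (auto simp: P_def Pset_def)
    have "{s\<in>{1..t}. fst (\<pi> s) = i} = pos ` ({i} \<times> {1..j})"
    proof
      show "{s\<in>{1..t}. fst (\<pi> s) = i} \<subseteq> pos ` ({i} \<times> {1..j})"
      proof
        fix s assume s: "s \<in> {s\<in>{1..t}. fst (\<pi> s) = i}"
        then have sN: "s \<in> {1..N}" using t by auto
        obtain j'' where sj: "\<pi> s = (i, j'')" using s by (cases "\<pi> s") auto
        have sP: "(i, j'') \<in> P" "pos (i, j'') = s" using F2[OF sN] sj by auto
        have "j'' \<le> j"
        proof (rule ccontr)
          assume "\<not> j'' \<le> j"
          then have "lt (i, j) (i, j'')" using F4 ijP sP by simp
          then have "t < s" using F3 ijP sP post by force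
          then show False using s by simp
        qed
        moreover have "1 \<le> j''" using sP by (auto simp: P_def Pset_def)
        ultimately show "s \<in> pos ` ({i} \<times> {1..j})" using sP by force
      qed
      show "pos ` ({i} \<times> {1..j}) \<subseteq> {s\<in>{1..t}. fst (\<pi> s) = i}"
      proof
        fix s assume "s \<in> pos ` ({i} \<times> {1..j})"
        then obtain j'' where j'': "j'' \<in> {1..j}" "s = pos (i, j'')" by auto
        have "(i, j'') \<in> P" using j'' i by (auto simp: P_def Pset_def)
        then show "s \<in> {s\<in>{1..t}. fst (\<pi> s) = i}"
          using F1 G1[OF ijP j''(1)] post j'' by force
      qed
    qed
    then show ?thesis using cardB[OF i] ij by simp
  qed
  have stair: "staircase n d \<pi>"
    unfolding stair_unf N_def[symmetric]
  proof (intro conjI)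
    show "\<forall>t\<in>{1..N}. fst (\<pi> t) \<in> {1..n}" using F2 by (force simp: P_def Pset_def)
    show "\<forall>i\<in>{1..n}. card {t \<in> {1..N}. fst (\<pi> t) = i} = d i" using S2 by blast
    show "\<forall>t\<in>{1..N}. snd (\<pi> t) = card {s \<in> {1..t}. fst (\<pi> s) = fst (\<pi> t)}" using S3 by blast
  qed
  have sorted: "w (fst (\<pi> t)) (snd (\<pi> t)) \<le> w (fst (\<pi> s)) (snd (\<pi> s))"
    if "1 \<le> s" "s \<le> t" "t \<le> N" for s t
  proof (cases "s = t")
    case True then show ?thesis by simp
  next
    case False
    have sP: "\<pi> s \<in> P" "pos (\<pi> s) = s" "\<pi> t \<in> P" "pos (\<pi> t) = t" using F2 that by auto
    then have "\<pi> s \<noteq> \<pi> t" using False by metis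
    then have "lt (\<pi> s) (\<pi> t) \<or> lt (\<pi> t) (\<pi> s)" by (rule tot)
    moreover have "\<not> lt (\<pi> t) (\<pi> s)" using F3[of "\<pi> t" "\<pi> s"] sP that by auto
    ultimately have "lt (\<pi> s) (\<pi> t)" by simp
    then show ?thesis unfolding lt_def by auto
  qed
  have S4: "j \<le> jpt \<pi> t i \<longleftrightarrow> pos (i, j) \<le> t" if "t \<le> N" "(i, j) \<in> P" for t i j
  proof -
    define S where "S = {s\<in>{1..t}. fst (\<pi> s) = i}"
    have jS: "jpt \<pi> t i = card S" by (simp add: S_def jpt_card)
    have i: "i \<in> {1..n}" "j \<le> d i" "1 \<le> j" using that by (auto simp: P_def Pset_def)
    show ?thesis
    proof
      assume h: "pos (i, j) \<le> t"
      have "pos ` ({i} \<times> {1..j}) \<subseteq> S"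
      proof
        fix s assume "s \<in> pos ` ({i} \<times> {1..j})"
        then obtain j'' where j'': "j'' \<in> {1..j}" "s = pos (i, j'')" by auto
        have "(i, j'') \<in> P" using j'' i by (auto simp: P_def Pset_def)
        then show "s \<in> S" using F1 G1[OF that(2) j''(1)] h j'' unfolding S_def by force
      qed
      then have "card (pos ` ({i} \<times> {1..j})) \<le> card S" by (rule card_mono[rotated]) (simp add: S_def)
      then show "j \<le> jpt \<pi> t i" using cardB[OF i(1,2)] jS by simp
    next
      assume h: "j \<le> jpt \<pi> t i"
      show "pos (i, j) \<le> t"
      proof (rule ccontr)
        assume nh: "\<not> pos (i, j) \<le> t"
        have "S \<subseteq> pos ` ({i} \<times> {1..j - 1})"
        proof
          fix s assume s: "s \<in> S"
          then have sN: "s \<in> {1..N}" using that(1) by (auto simp: S_def)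
          obtain j'' where sj: "\<pi> s = (i, j'')" using s by (cases "\<pi> s") (auto simp: S_def)
          have sP: "(i, j'') \<in> P" "pos (i, j'') = s" using F2[OF sN] sj by auto
          have "\<not> j \<le> j''"
          proof
            assume "j \<le> j''"
            then have "pos (i, j) \<le> s" using G2[OF sN _ that(2)] sj by simp
            then show False using nh s by (auto simp: S_def)
          qed
          moreover have "1 \<le> j''" using sP by (auto simp: P_def Pset_def)
          ultimately show "s \<in> pos ` ({i} \<times> {1..j - 1})" using sP by force
        qed
        then have "card S \<le> card (pos ` ({i} \<times> {1..j - 1}))" by (rule card_mono[rotated]) simp
        also have "\<dots> \<le> card ({i} \<times> {1..j - 1})" by (rule card_image_le) simp
        also have "\<dots> = j - 1" by (simp add: card_cartesian_product_singleton)
        finally show False using h jS i by simp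
      qed
    qed
  qed
  show ?thesis
    apply (rule exI[of _ \<pi>], rule exI[of _ pos])
    using stair F1 F2 sorted S4 unfolding P_def N_def by blast
qed


definition good :: "nat \<Rightarrow> (nat \<Rightarrow> nat) \<Rightarrow> (nat \<Rightarrow> nat \<Rightarrow> real) \<Rightarrow> (nat \<Rightarrow> nat \<times> nat) \<Rightarrow> (nat \<times> nat \<Rightarrow> nat) \<Rightarrow> bool" where
  "good n d w \<pi> pos \<longleftrightarrow> staircase n d \<pi> \<and>
     (\<forall>q\<in>Pset n d. pos q \<in> {1..NN n d} \<and> \<pi> (pos q) = q) \<and>
     (\<forall>t\<in>{1..NN n d}. \<pi> t \<in> Pset n d \<and> pos (\<pi> t) = t) \<and>
     (\<forall>s t. 1 \<le> s \<longrightarrow> s \<le> t \<longrightarrow> t \<le> NN n d \<longrightarrow> w (fst (\<pi> t)) (snd (\<pi> t)) \<le> w (fst (\<pi> s)) (snd (\<pi> s))) \<and>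
     (\<forall>t\<le>NN n d. \<forall>i j. (i, j) \<in> Pset n d \<longrightarrow> (j \<le> jpt \<pi> t i \<longleftrightarrow> pos (i, j) \<le> t))"

lemma exists_good:
  assumes "\<forall>i\<in>{1..n}. inD (d i) (w i)"
  shows "\<exists>\<pi> pos. good n d w \<pi> pos"
proof -
  have "\<forall>i\<in>{1..n}. \<forall>j\<in>{1..<d i}. w i (Suc j) \<le> w i j" using assms by (simp add: inD_def)
  from sorted_stair[OF this] show ?thesis unfolding good_def by blast
qed

lemma inD_vals:
  assumes "\<forall>i\<in>{1..n}. inD (d i) (w i)" "(i, j) \<in> Pset n d"
  shows "0 \<le> w i j" "w i j \<le> 1"
proof -
  have i: "i \<in> {1..n}" "1 \<le> j" "j \<le> d i" using assms(2) by (auto simp: Pset_def)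
  have D: "inD (d i) (w i)" using assms(1) i by blast
  have dec: "\<forall>j\<in>{1..<d i}. w i (Suc j) \<le> w i j" using D by (simp add: inD_def)
  have "w i (d i) \<le> w i j" using dec_chain[OF dec i(2) i(3)] by simp
  moreover have "0 \<le> w i (d i)" using D i by (simp add: inD_def)
  ultimately show "0 \<le> w i j" by simp
  have "w i j \<le> w i 1" using dec_chain[OF dec _ i(2)] i by simp
  moreover have "w i 1 \<le> 1" using D i by (simp add: inD_def)
  ultimately show "w i j \<le> 1" by simp
qed

lemma abel:
  fixes c ps :: "nat \<Rightarrow> real"
  shows "ps 0 * c 0 + (\<Sum>t\<in>{1..N}. (ps t - ps (t - 1)) * c t)
       = (\<Sum>t\<in>{0..N}. (c t - c (Suc t)) * ps t) + c (Suc N) * ps N"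
proof (induction N)
  case 0 then show ?case by (simp add: algebra_simps)
next
  case (Suc N)
  have "(\<Sum>t\<in>{1..Suc N}. (ps t - ps (t - 1)) * c t) = (\<Sum>t\<in>{1..N}. (ps t - ps (t - 1)) * c t) + (ps (Suc N) - ps N) * c (Suc N)"
    by simp
  moreover have "(\<Sum>t\<in>{0..Suc N}. (c t - c (Suc t)) * ps t) = (\<Sum>t\<in>{0..N}. (c t - c (Suc t)) * ps t) + (c (Suc N) - c (Suc (Suc N))) * ps (Suc N)"
    by simp
  ultimately show ?case using Suc by (simp add: algebra_simps)
qed

definition cc :: "nat \<Rightarrow> (nat \<Rightarrow> nat) \<Rightarrow> (nat \<Rightarrow> nat \<Rightarrow> real) \<Rightarrow> (nat \<Rightarrow> nat \<times> nat) \<Rightarrow> nat \<Rightarrow> real" where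
  "cc n d w \<pi> t = (if t = 0 then 1 else if t \<le> NN n d then w (fst (\<pi> t)) (snd (\<pi> t)) else 0)"

context
  fixes n :: nat and d :: "nat \<Rightarrow> nat" and w :: "nat \<Rightarrow> nat \<Rightarrow> real"
    and \<pi> :: "nat \<Rightarrow> nat \<times> nat" and pos :: "nat \<times> nat \<Rightarrow> nat"
  assumes inDw: "\<forall>i\<in>{1..n}. inD (d i) (w i)" and gd: "good n d w \<pi> pos"
begin

lemma gd_stair: "staircase n d \<pi>" using gd by (simp add: good_def)
lemma gd_F1: "q \<in> Pset n d \<Longrightarrow> pos q \<in> {1..NN n d} \<and> \<pi> (pos q) = q" using gd by (simp add: good_def)
lemma gd_F2: "t \<in> {1..NN n d} \<Longrightarrow> \<pi> t \<in> Pset n d \<and> pos (\<pi> t) = t" using gd by (simp add: good_def)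
lemma gd_sorted: "1 \<le> s \<Longrightarrow> s \<le> t \<Longrightarrow> t \<le> NN n d \<Longrightarrow> w (fst (\<pi> t)) (snd (\<pi> t)) \<le> w (fst (\<pi> s)) (snd (\<pi> s))"
  using gd unfolding good_def by blast
lemma gd_S4: "t \<le> NN n d \<Longrightarrow> (i, j) \<in> Pset n d \<Longrightarrow> (j \<le> jpt \<pi> t i \<longleftrightarrow> pos (i, j) \<le> t)"
  using gd unfolding good_def by blast

lemma cc_vals: "t \<le> Suc (NN n d) \<Longrightarrow> 0 \<le> cc n d w \<pi> t \<and> cc n d w \<pi> t \<le> 1"
proof -
  assume t: "t \<le> Suc (NN n d)"
  show ?thesis
  proof (cases "t \<in> {1..NN n d}")
    case True
    then have "\<pi> t \<in> Pset n d" using gd_F2 by blast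
    then have "0 \<le> w (fst (\<pi> t)) (snd (\<pi> t)) \<and> w (fst (\<pi> t)) (snd (\<pi> t)) \<le> 1"
      using inD_vals[OF inDw, of "fst (\<pi> t)" "snd (\<pi> t)"] by simp
    then show ?thesis using True by (simp add: cc_def)
  next
    case False then show ?thesis by (auto simp: cc_def)
  qed
qed

lemma cc_mono: "t \<le> t' \<Longrightarrow> t' \<le> Suc (NN n d) \<Longrightarrow> cc n d w \<pi> t' \<le> cc n d w \<pi> t"
proof -
  assume a: "t \<le> t'" "t' \<le> Suc (NN n d)"
  show ?thesis
  proof (cases "t = 0")
    case True then show ?thesis using cc_vals[OF a(2)] by (simp add: cc_def)
  next
    case False
    show ?thesis
    proof (cases "t' \<le> NN n d")
      case True
      then show ?thesis using False a gd_sorted[of t t'] by (simp add: cc_def)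
    next
      case f2: False
      then have "cc n d w \<pi> t' = 0" by (simp add: cc_def)
      then show ?thesis using cc_vals[of t] a by simp
    qed
  qed
qed

lemma lam_nonneg: "0 \<le> cc n d w \<pi> t - cc n d w \<pi> (Suc t)" if "t \<le> NN n d"
  using cc_mono[of t "Suc t"] that by simp

lemma lam_sum: "(\<Sum>t\<in>{0..NN n d}. cc n d w \<pi> t - cc n d w \<pi> (Suc t)) = 1"
  using tele[of 0 "NN n d" "cc n d w \<pi>"] by (simp add: cc_def)

lemma cc_pos: "(i, j) \<in> Pset n d \<Longrightarrow> cc n d w \<pi> (pos (i, j)) = w i j"
  using gd_F1[of "(i, j)"] by (auto simp: cc_def)

lemma rep: assumes "(i, j) \<in> Pset n d"
  shows "w i j = (\<Sum>t\<in>{0..NN n d}. (cc n d w \<pi> t - cc n d w \<pi> (Suc t)) * of_bool (j \<le> jpt \<pi> t i))"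
proof -
  have p: "pos (i, j) \<in> {1..NN n d}" using gd_F1[OF assms] by simp
  have "(\<Sum>t\<in>{0..NN n d}. (cc n d w \<pi> t - cc n d w \<pi> (Suc t)) * of_bool (j \<le> jpt \<pi> t i))
      = (\<Sum>t\<in>{0..NN n d}. if t \<in> {pos (i, j)..NN n d} then cc n d w \<pi> t - cc n d w \<pi> (Suc t) else 0)"
    by (rule sum.cong) (use gd_S4 assms in auto)
  also have "\<dots> = (\<Sum>t\<in>{0..NN n d} \<inter> {pos (i, j)..NN n d}. cc n d w \<pi> t - cc n d w \<pi> (Suc t))"
    by (rule sum.inter_restrict[symmetric]) simp
  also have "{0..NN n d} \<inter> {pos (i, j)..NN n d} = {pos (i, j)..NN n d}" by auto
  also have "(\<Sum>t\<in>{pos (i, j)..NN n d}. cc n d w \<pi> t - cc n d w \<pi> (Suc t)) = cc n d w \<pi> (pos (i, j)) - cc n d w \<pi> (Suc (NN n d))"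
    by (rule tele) (use p in auto)
  also have "\<dots> = w i j" using cc_pos[OF assms] by (simp add: cc_def)
  finally show ?thesis by simp
qed

lemma Api_abel: "Api n d Ps \<pi> w = (\<Sum>t\<in>{0..NN n d}. (cc n d w \<pi> t - cc n d w \<pi> (Suc t)) * Ps (jpt \<pi> t))"
proof -
  have "Api n d Ps \<pi> w = Ps (jpt \<pi> 0) * cc n d w \<pi> 0 + (\<Sum>t\<in>{1..NN n d}. (Ps (jpt \<pi> t) - Ps (jpt \<pi> (t - 1))) * cc n d w \<pi> t)"
    unfolding Api_def by (auto simp: cc_def intro!: sum.cong)
  also have "\<dots> = (\<Sum>t\<in>{0..NN n d}. (cc n d w \<pi> t - cc n d w \<pi> (Suc t)) * Ps (jpt \<pi> t)) + cc n d w \<pi> (Suc (NN n d)) * Ps (jpt \<pi> (NN n d))"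
    by (rule abel[of "\<lambda>t. Ps (jpt \<pi> t)"])
  finally show ?thesis by (simp add: cc_def)
qed

end

lemma Api_affine:
  fixes lam :: "nat \<Rightarrow> real"
  assumes st: "staircase n d \<pi>'" and fin: "finite T"
    and rp: "\<forall>(i, j)\<in>Pset n d. w i j = (\<Sum>t\<in>T. lam t * B t i j)"
    and sm: "(\<Sum>t\<in>T. lam t) = 1"
  shows "Api n d Ps \<pi>' w = (\<Sum>t\<in>T. lam t * Api n d Ps \<pi>' (B t))"
proof -
  let ?b = "\<lambda>s. Ps (jpt \<pi>' s) - Ps (jpt \<pi>' (s - 1))"
  have "(\<Sum>t\<in>T. lam t * Api n d Ps \<pi>' (B t))
      = (\<Sum>t\<in>T. lam t * Ps (jpt \<pi>' 0)) + (\<Sum>t\<in>T. \<Sum>s\<in>{1..NN n d}. lam t * (?b s * B t (fst (\<pi>' s)) (snd (\<pi>' s))))"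
    by (simp add: Api_def algebra_simps sum.distrib sum_distrib_left)
  also have "(\<Sum>t\<in>T. \<Sum>s\<in>{1..NN n d}. lam t * (?b s * B t (fst (\<pi>' s)) (snd (\<pi>' s))))
      = (\<Sum>s\<in>{1..NN n d}. ?b s * (\<Sum>t\<in>T. lam t * B t (fst (\<pi>' s)) (snd (\<pi>' s))))"
    by (subst sum.swap) (simp add: sum_distrib_left algebra_simps)
  also have "\<dots> = (\<Sum>s\<in>{1..NN n d}. ?b s * w (fst (\<pi>' s)) (snd (\<pi>' s)))"
  proof (rule sum.cong)
    fix s assume "s \<in> {1..NN n d}"
    then have "\<pi>' s \<in> Pset n d" using stair_inP[OF st] by blast
    then show "?b s * (\<Sum>t\<in>T. lam t * B t (fst (\<pi>' s)) (snd (\<pi>' s))) = ?b s * w (fst (\<pi>' s)) (snd (\<pi>' s))"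
      using rp by (cases "\<pi>' s") auto
  qed simp
  also have "(\<Sum>t\<in>T. lam t * Ps (jpt \<pi>' 0)) = Ps (jpt \<pi>' 0)"
    using sm by (simp add: sum_distrib_right[symmetric])
  finally show ?thesis by (simp add: Api_def)
qed

lemma key:
  fixes Ps :: "(nat \<Rightarrow> nat) \<Rightarrow> real"
  assumes SM: "\<And>a b. (\<forall>i\<in>{1..n}. a i \<le> d i \<and> b i \<le> d i) \<Longrightarrow>
                 Ps a + Ps b \<le> Ps (\<lambda>i. max (a i) (b i)) + Ps (\<lambda>i. min (a i) (b i))"
    and CG: "\<And>a b. (\<forall>i\<in>{1..n}. a i = b i) \<Longrightarrow> Ps a = Ps b"
    and inDw: "\<forall>i\<in>{1..n}. inD (d i) (w i)" and gd: "good n d w \<pi> pos"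
    and st': "staircase n d \<pi>'"
  shows "Api n d Ps \<pi> w \<le> Api n d Ps \<pi>' w"
proof -
  let ?lam = "\<lambda>t. cc n d w \<pi> t - cc n d w \<pi> (Suc t)"
  let ?B = "\<lambda>t i j. of_bool (j \<le> jpt \<pi> t i) :: real"
  have st: "staircase n d \<pi>" using gd_stair[OF inDw gd] .
  have "Api n d Ps \<pi> w = (\<Sum>t\<in>{0..NN n d}. ?lam t * Ps (jpt \<pi> t))"
    by (rule Api_abel[OF inDw gd])
  also have "\<dots> \<le> (\<Sum>t\<in>{0..NN n d}. ?lam t * Api n d Ps \<pi>' (?B t))"
  proof (rule sum_mono)
    fix t assume t: "t \<in> {0..NN n d}"
    have "Ps (jpt \<pi> t) \<le> Api n d Ps \<pi>' (\<lambda>i j. of_bool (j \<le> jpt \<pi> t i))"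
      by (rule lower[OF SM CG st']) (use jpt_le[OF st] t in auto)
    then show "?lam t * Ps (jpt \<pi> t) \<le> ?lam t * Api n d Ps \<pi>' (?B t)"
      using lam_nonneg[OF inDw gd, of t] t by (simp add: mult_left_mono)
  qed
  also have "\<dots> = Api n d Ps \<pi>' w"
  proof (rule Api_affine[OF st', symmetric])
    show "\<forall>(i, j)\<in>Pset n d. w i j = (\<Sum>t\<in>{0..NN n d}. ?lam t * ?B t i j)"
      using rep[OF inDw gd] by blast
    show "(\<Sum>t\<in>{0..NN n d}. ?lam t) = 1" by (rule lam_sum[OF inDw gd])
  qed simp
  finally show ?thesis .
qed

lemma binary:
  fixes Ps :: "(nat \<Rightarrow> nat) \<Rightarrow> real"
  assumes inDw: "\<forall>i\<in>{1..n}. inD (d i) (w i)" and gd: "good n d w \<pi> pos"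
    and bin: "\<forall>(i, j)\<in>Pset n d. w i j \<in> {0, 1}"
  shows "\<exists>g. (\<forall>i\<in>{1..n}. g i \<le> d i) \<and> (\<forall>(i, j)\<in>Pset n d. w i j = of_bool (j \<le> g i)) \<and>
             Api n d Ps \<pi> w = Ps g"
proof -
  let ?c = "cc n d w \<pi>"
  let ?N = "NN n d"
  have st: "staircase n d \<pi>" using gd_stair[OF inDw gd] .
  have cbin: "?c t \<in> {0, 1}" if "t \<le> ?N" for t
  proof (cases "t = 0")
    case True then show ?thesis by (simp add: cc_def)
  next
    case False
    then have "t \<in> {1..?N}" using that by simp
    then have "\<pi> t \<in> Pset n d" using gd_F2[OF inDw gd] by blast
    then have "w (fst (\<pi> t)) (snd (\<pi> t)) \<in> {0, 1}" using bin by (cases "\<pi> t") auto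
    then show ?thesis using False that by (simp add: cc_def)
  qed
  define M where "M = {t\<in>{0..?N}. ?c t = 1}"
  have finM: "finite M" by (simp add: M_def)
  have M0: "0 \<in> M" by (simp add: M_def cc_def)
  define m where "m = Max M"
  have mM: "m \<in> M" unfolding m_def using finM M0 by (intro Max_in) auto
  have mN: "m \<le> ?N" and cm: "?c m = 1" using mM by (auto simp: M_def)
  have c1: "?c t = 1" if "t \<le> m" for t
    using cc_mono[OF inDw gd that] cc_vals[OF inDw gd, of t] cm mN that by simp
  have c0: "?c t = 0" if "m < t" "t \<le> ?N" for t
  proof -
    have "t \<notin> M" using that Max_ge[OF finM, of t] unfolding m_def by linarith
    then show ?thesis using cbin[OF that(2)] that by (auto simp: M_def)
  qed
  have cof: "?c t = of_bool (t \<le> m)" if "t \<le> ?N" for t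
    using c1 c0 that by (cases "t \<le> m") auto
  define g where "g = jpt \<pi> m"
  have gb: "\<forall>i\<in>{1..n}. g i \<le> d i" using jpt_le[OF st mN] by (simp add: g_def)
  have wg: "\<forall>(i, j)\<in>Pset n d. w i j = of_bool (j \<le> g i)"
  proof (intro ballI, clarify)
    fix i j assume ij: "(i, j) \<in> Pset n d"
    have p: "pos (i, j) \<in> {1..?N}" using gd_F1[OF inDw gd ij] by simp
    have "w i j = ?c (pos (i, j))" using cc_pos[OF inDw gd ij] by simp
    also have "\<dots> = of_bool (pos (i, j) \<le> m)" using cof p by simp
    also have "\<dots> = of_bool (j \<le> g i)" using gd_S4[OF inDw gd mN ij] by (simp add: g_def)
    finally show "w i j = of_bool (j \<le> g i)" .
  qed
  have "Api n d Ps \<pi> w = Ps (jpt \<pi> 0) + (\<Sum>t\<in>{1..?N}. if t \<le> m then Ps (jpt \<pi> t) - Ps (jpt \<pi> (t - 1)) else 0)"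
    unfolding Api_def
  proof (rule arg_cong[where f="\<lambda>x. Ps (jpt \<pi> 0) + x"], rule sum.cong)
    fix t assume t: "t \<in> {1..?N}"
    then have "w (fst (\<pi> t)) (snd (\<pi> t)) = ?c t" by (simp add: cc_def)
    then show "(Ps (jpt \<pi> t) - Ps (jpt \<pi> (t - 1))) * w (fst (\<pi> t)) (snd (\<pi> t)) =
        (if t \<le> m then Ps (jpt \<pi> t) - Ps (jpt \<pi> (t - 1)) else 0)"
      using cof[of t] t by simp
  qed simp
  also have "(\<Sum>t\<in>{1..?N}. if t \<le> m then Ps (jpt \<pi> t) - Ps (jpt \<pi> (t - 1)) else 0)
      = (\<Sum>t\<in>{t\<in>{1..?N}. t \<le> m}. Ps (jpt \<pi> t) - Ps (jpt \<pi> (t - 1)))"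
    by (rule sum.inter_filter[symmetric]) simp
  also have "{t\<in>{1..?N}. t \<le> m} = {Suc 0..m}" using mN by auto
  also have "(\<Sum>t\<in>{Suc 0..m}. Ps (jpt \<pi> t) - Ps (jpt \<pi> (t - 1))) = Ps (jpt \<pi> m) - Ps (jpt \<pi> 0)"
    by (rule sum_telescope'') simp
  finally have "Api n d Ps \<pi> w = Ps g" by (simp add: g_def)
  then show ?thesis using gb wg by blast
qed


definition is_aff :: "nat \<Rightarrow> (nat \<Rightarrow> nat) \<Rightarrow> (pt \<Rightarrow> real) \<Rightarrow> bool" where
  "is_aff n d g \<longleftrightarrow> (\<exists>cx cz cm b. \<forall>q\<in>mip_space n d. g q = lin_form n d (cx, cz, cm) q + b)"

lemma lin_form_eq: "lin_form n d (cx, cz, cm) (x, z, mu) =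
   (\<Sum>i\<in>{1..n}. cx i * x i) + (\<Sum>i\<in>{1..n}. \<Sum>j\<in>{1..d i}. cz i j * z i j) + cm * mu"
  by (simp add: lin_form_def)

lemma aff_const: "is_aff n d (\<lambda>q. a)"
  unfolding is_aff_def
  by (rule exI[of _ "\<lambda>_. 0"], rule exI[of _ "\<lambda>_ _. 0"], rule exI[of _ 0], rule exI[of _ a])
     (auto simp: lin_form_def)

lemma aff_add: assumes "is_aff n d g" "is_aff n d h" shows "is_aff n d (\<lambda>q. g q + h q)"
proof -
  obtain cx cz cm b where g: "\<forall>q\<in>mip_space n d. g q = lin_form n d (cx, cz, cm) q + b"
    using assms(1) unfolding is_aff_def by blast
  obtain cx' cz' cm' b' where h: "\<forall>q\<in>mip_space n d. h q = lin_form n d (cx', cz', cm') q + b'"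
    using assms(2) unfolding is_aff_def by blast
  show ?thesis unfolding is_aff_def
  proof (intro exI ballI)
    fix q assume q: "q \<in> mip_space n d"
    obtain x z mu where qq: "q = (x, z, mu)" by (cases q)
    show "g q + h q = lin_form n d (\<lambda>i. cx i + cx' i, \<lambda>i j. cz i j + cz' i j, cm + cm') q + (b + b')"
      using g h q unfolding qq
      by (simp add: lin_form_eq algebra_simps sum.distrib)
  qed
qed

lemma aff_cmul: assumes "is_aff n d g" shows "is_aff n d (\<lambda>q. a * g q)"
proof -
  obtain cx cz cm b where g: "\<forall>q\<in>mip_space n d. g q = lin_form n d (cx, cz, cm) q + b"
    using assms(1) unfolding is_aff_def by blast
  show ?thesis unfolding is_aff_def
  proof (intro exI ballI)
    fix q assume q: "q \<in> mip_space n d"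
    obtain x z mu where qq: "q = (x, z, mu)" by (cases q)
    show "a * g q = lin_form n d (\<lambda>i. a * cx i, \<lambda>i j. a * cz i j, a * cm) q + a * b"
      using g q unfolding qq
      by (simp add: lin_form_eq algebra_simps sum_distrib_left)
  qed
qed

lemma aff_mulc: "is_aff n d g \<Longrightarrow> is_aff n d (\<lambda>q. g q * a)"
  using aff_cmul[of n d g a] by (simp add: mult.commute)

lemma aff_neg: "is_aff n d g \<Longrightarrow> is_aff n d (\<lambda>q. - g q)"
  using aff_cmul[of n d g "-1"] by simp

lemma aff_diff: "is_aff n d g \<Longrightarrow> is_aff n d h \<Longrightarrow> is_aff n d (\<lambda>q. g q - h q)"
  using aff_add[of n d g "\<lambda>q. - h q"] aff_neg[of n d h] by simp

lemma aff_if: "is_aff n d g \<Longrightarrow> is_aff n d h \<Longrightarrow> is_aff n d (\<lambda>q. if P then g q else h q)"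
  by (cases P) simp_all

lemma aff_sum: assumes "finite A" "\<forall>a\<in>A. is_aff n d (g a)" shows "is_aff n d (\<lambda>q. \<Sum>a\<in>A. g a q)"
  using assms
proof (induction A rule: finite_induct)
  case empty then show ?case by (simp add: aff_const)
next
  case (insert a A)
  then show ?case using aff_add[of n d "g a" "\<lambda>q. \<Sum>a\<in>A. g a q"] by simp
qed

lemma aff_x: "is_aff n d (\<lambda>q. fst q i)"
proof (cases "i \<in> {1..n}")
  case True
  show ?thesis unfolding is_aff_def
  proof (intro exI ballI)
    fix q assume q: "q \<in> mip_space n d"
    obtain x z mu where qq: "q = (x, z, mu)" by (cases q)
    have "(\<Sum>k\<in>{1..n}. (if k = i then 1 else 0) * x k) = (\<Sum>k\<in>{1..n}. if k = i then x k else 0)"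
      by (rule sum.cong) auto
    also have "\<dots> = x i" using True by (simp add: sum.delta)
    finally show "fst q i = lin_form n d (\<lambda>k. if k = i then 1 else 0, \<lambda>_ _. 0, 0) q + 0"
      unfolding qq lin_form_eq by simp
  qed
next
  case False
  have "\<forall>q\<in>mip_space n d. fst q i = 0" using False by (auto simp: mip_space_def)
  then show ?thesis using aff_const[of n d 0] unfolding is_aff_def by simp
qed

lemma aff_z: "is_aff n d (\<lambda>q. fst (snd q) i j)"
proof (cases "i \<in> {1..n} \<and> j \<in> {1..d i}")
  case True
  show ?thesis unfolding is_aff_def
  proof (intro exI ballI)
    fix q assume q: "q \<in> mip_space n d"
    obtain x z mu where qq: "q = (x, z, mu)" by (cases q)
    have inner: "(\<Sum>l\<in>{1..d k}. (if k = i \<and> l = j then 1 else 0) * z k l) = (if k = i then z i j else 0)" for k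
    proof (cases "k = i")
      case True
      have "(\<Sum>l\<in>{1..d k}. (if k = i \<and> l = j then 1 else 0) * z k l) = (\<Sum>l\<in>{1..d i}. if l = j then z i l else 0)"
        using True by (intro sum.cong) auto
      also have "\<dots> = z i j" using \<open>i \<in> {1..n} \<and> j \<in> {1..d i}\<close> by (simp add: sum.delta)
      finally show ?thesis using True by simp
    qed simp
    have "(\<Sum>k\<in>{1..n}. \<Sum>l\<in>{1..d k}. (if k = i \<and> l = j then 1 else 0) * z k l) = (\<Sum>k\<in>{1..n}. if k = i then z i j else 0)"
      by (rule sum.cong[OF refl]) (rule inner)
    also have "\<dots> = z i j" using True by (simp add: sum.delta)
    finally show "fst (snd q) i j = lin_form n d (\<lambda>_. 0, \<lambda>k l. if k = i \<and> l = j then 1 else 0, 0) q + 0"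
      unfolding qq lin_form_eq by simp
  qed
next
  case False
  have "\<forall>q\<in>mip_space n d. fst (snd q) i j = 0" using False by (auto simp: mip_space_def)
  then show ?thesis using aff_const[of n d 0] unfolding is_aff_def by simp
qed

lemma aff_mu: "is_aff n d (\<lambda>q. snd (snd q))"
  unfolding is_aff_def
  by (rule exI[of _ "\<lambda>_. 0"], rule exI[of _ "\<lambda>_ _. 0"], rule exI[of _ 1], rule exI[of _ 0])
     (auto simp: lin_form_def)

lemma aff_cong: "is_aff n d g \<Longrightarrow> (\<And>q. q \<in> mip_space n d \<Longrightarrow> g q = h q) \<Longrightarrow> is_aff n d h"
  unfolding is_aff_def by metis

lemma poly_of_affs:
  assumes fin: "finite GS" and aff: "\<forall>g\<in>GS. is_aff n d g"
  shows "polyhedron_in n d {q\<in>mip_space n d. \<forall>g\<in>GS. g q \<le> 0}"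
proof -
  have "\<forall>g\<in>GS. \<exists>cb. \<forall>q\<in>mip_space n d. g q = lin_form n d (fst cb) q + snd cb"
  proof
    fix g assume "g \<in> GS"
    then obtain cx cz cm b where "\<forall>q\<in>mip_space n d. g q = lin_form n d (cx, cz, cm) q + b"
      using aff unfolding is_aff_def by blast
    then show "\<exists>cb. \<forall>q\<in>mip_space n d. g q = lin_form n d (fst cb) q + snd cb"
      by (intro exI[of _ "((cx, cz, cm), b)"]) simp
  qed
  then obtain F where F: "\<forall>g\<in>GS. \<forall>q\<in>mip_space n d. g q = lin_form n d (fst (F g)) q + snd (F g)"
    by metis
  define FF where "FF = (\<lambda>g. (fst (F g), - snd (F g))) ` GS"
  have "{q\<in>mip_space n d. \<forall>g\<in>GS. g q \<le> 0} = {q\<in>mip_space n d. \<forall>(c, b)\<in>FF. lin_form n d c q \<le> b}"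
    using F unfolding FF_def by fastforce
  moreover have "finite FF" using fin by (simp add: FF_def)
  ultimately show ?thesis unfolding polyhedron_in_def by blast
qed

lemma aff_Tmap: "is_aff n d (\<lambda>q. Tmap D (fst (snd q) i) m)"
proof -
  have e: "Tmap D (fst (snd q) i) m = (if m \<le> D then (if m = 0 then 1 else if m \<le> D then fst (snd q) i m else 0)
       - (if Suc m \<le> D then fst (snd q) i (Suc m) else 0) else 0)" for q
    by (simp add: Tmap_def Let_def)
  show ?thesis unfolding e
    by (intro aff_if aff_diff aff_const aff_z)
qed

lemma aff_Lsig: "is_aff n d (\<lambda>q. Lsig n d s (fst (snd q)) i j)"
proof -
  have e: "Lsig n d s (fst (snd q)) i j = (if i \<in> {1..n} then (if j \<in> {1..d i} then
      (\<Sum>k\<in>{j..d i}. if k \<le> d i then (\<Sum>m\<in>{0..d i}. (if k = s i m then 1 else 0) * Tmap (d i) (fst (snd q) i) m) else 0)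
      else 0) else 0)" for q
    by (simp add: Lsig_def Tinv_def Pmul_def)
  show ?thesis unfolding e
    by (intro aff_if aff_const aff_sum ballI finite_atLeastAtMost aff_cmul aff_Tmap)
qed


lemma good_mono:
  assumes "good n d w \<pi> pos" "mono h"
  shows "good n d (\<lambda>i j. h (w i j)) \<pi> pos"
  using assms unfolding good_def mono_def by blast

lemma Api_restrict: "Api n d Ps (restrict \<pi> {1..NN n d}) w = Api n d Ps \<pi> w"
proof -
  have J: "jpt (restrict \<pi> {1..NN n d}) t = jpt \<pi> t" if "t \<le> NN n d" for t
    using that by (induction t) auto
  show ?thesis unfolding Api_def
  proof (rule arg_cong2[where f="(+)"])
    show "Ps (jpt (restrict \<pi> {1..NN n d}) 0) = Ps (jpt \<pi> 0)" by simp
    show "(\<Sum>t\<in>{1..NN n d}. (Ps (jpt (restrict \<pi> {1..NN n d}) t) - Ps (jpt (restrict \<pi> {1..NN n d}) (t - 1))) *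
          w (fst (restrict \<pi> {1..NN n d} t)) (snd (restrict \<pi> {1..NN n d} t))) =
        (\<Sum>t\<in>{1..NN n d}. (Ps (jpt \<pi> t) - Ps (jpt \<pi> (t - 1))) * w (fst (\<pi> t)) (snd (\<pi> t)))"
    proof (rule sum.cong[OF refl])
      fix t assume t: "t \<in> {1..NN n d}"
      then have "jpt (restrict \<pi> {1..NN n d}) t = jpt \<pi> t" "jpt (restrict \<pi> {1..NN n d}) (t - 1) = jpt \<pi> (t - 1)"
        "restrict \<pi> {1..NN n d} t = \<pi> t"
        using J[of t] J[of "t - 1"] by auto
      then show "(Ps (jpt (restrict \<pi> {1..NN n d}) t) - Ps (jpt (restrict \<pi> {1..NN n d}) (t - 1))) *
          w (fst (restrict \<pi> {1..NN n d} t)) (snd (restrict \<pi> {1..NN n d} t)) =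
          (Ps (jpt \<pi> t) - Ps (jpt \<pi> (t - 1))) * w (fst (\<pi> t)) (snd (\<pi> t))" by simp
    qed
  qed
qed

lemma Api_cong: assumes "staircase n d \<pi>" "\<forall>(i, j)\<in>Pset n d. a i j = b i j"
  shows "Api n d Ps \<pi> a = Api n d Ps \<pi> b"
  unfolding Api_def
proof (rule arg_cong[where f="\<lambda>x. Ps (jpt \<pi> 0) + x"], rule sum.cong)
  fix t assume "t \<in> {1..NN n d}"
  then have "\<pi> t \<in> Pset n d" using stair_inP[OF assms(1)] by blast
  then show "(Ps (jpt \<pi> t) - Ps (jpt \<pi> (t - 1))) * a (fst (\<pi> t)) (snd (\<pi> t)) =
      (Ps (jpt \<pi> t) - Ps (jpt \<pi> (t - 1))) * b (fst (\<pi> t)) (snd (\<pi> t))"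
    using assms(2) by (cases "\<pi> t") auto
qed simp

lemma Lsig_i: "i \<in> {1..n} \<Longrightarrow> Lsig n d s z i = Lb (d i) (s i) (z i)"
  by (simp add: Lsig_def Lb_def)

lemma Lsig_zero: "\<not> (i \<in> {1..n} \<and> j \<in> {1..d i}) \<Longrightarrow> Lsig n d s z i j = 0"
  by (auto simp: Lsig_def Tinv_def)

lemma Lsig_cong: "(\<forall>i\<in>{1..n}. \<forall>j\<in>{1..d i}. a i j = b i j) \<Longrightarrow> Lsig n d s a = Lsig n d s b"
proof
  fix i assume h: "\<forall>i\<in>{1..n}. \<forall>j\<in>{1..d i}. a i j = b i j"
  show "Lsig n d s a i = Lsig n d s b i"
  proof (cases "i \<in> {1..n}")
    case True
    then show ?thesis using Lb_cong[of "d i" "a i" "b i" "s i"] h by (simp add: Lsig_i)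
  next
    case False then show ?thesis unfolding Lsig_def if_not_P[OF False] by simp
  qed
qed

lemma Lsig_comb: "Lsig n d s (\<lambda>i j. (1 - u) * a i j + u * b i j) i j = (1 - u) * Lsig n d s a i j + u * Lsig n d s b i j"
proof (cases "i \<in> {1..n}")
  case True
  then show ?thesis using Lb_comb[of "d i" "s i" u "a i" "b i" j] by (simp add: Lsig_i)
next
  case False then show ?thesis unfolding Lsig_def if_not_P[OF False] by simp
qed

lemma tele_onehot:
  fixes q :: "nat \<Rightarrow> real"
  assumes "K \<le> D"
  shows "q 0 + (\<Sum>j\<in>{1..D}. (q j - q (j - 1)) * of_bool (j \<le> K)) = q K"
proof -
  have "(\<Sum>j\<in>{1..D}. (q j - q (j - 1)) * of_bool (j \<le> K)) = (\<Sum>j\<in>{1..D}. if j \<le> K then q j - q (j - 1) else 0)"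
    by (rule sum.cong) auto
  also have "\<dots> = (\<Sum>j\<in>{j\<in>{1..D}. j \<le> K}. q j - q (j - 1))"
    by (rule sum.inter_filter[symmetric]) simp
  also have "{j\<in>{1..D}. j \<le> K} = {Suc 0..K}" using assms by auto
  also have "(\<Sum>j\<in>{Suc 0..K}. q j - q (j - 1)) = q K - q 0" by (rule sum_telescope'') simp
  finally show ?thesis by simp
qed

locale thm_ctx =
  fixes n :: nat and d :: "nat \<Rightarrow> nat" and p :: "nat \<Rightarrow> nat \<Rightarrow> real"
    and f :: "nat \<Rightarrow> real \<Rightarrow> real" and L U :: "nat \<Rightarrow> real"
    and phi :: "(nat \<Rightarrow> real) \<Rightarrow> real" and \<sigma> :: "nat \<Rightarrow> nat \<Rightarrow> nat"
  assumes n_pos: "n \<ge> 1"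
    and d_pos: "\<forall>i\<in>{1..n}. d i \<ge> 1"
    and p_incr: "\<forall>i\<in>{1..n}. \<forall>j\<in>{1..d i}. p i (j - 1) < p i j"
    and f_range: "\<forall>i\<in>{1..n}. \<forall>j\<in>{0..d i}. L i \<le> f i (p i j) \<and> f i (p i j) \<le> U i"
    and phi_super: "supermodular_on (dom_box n L U) phi"
    and \<sigma>_perm: "\<forall>i\<in>{1..n}. bij_betw (\<sigma> i) {0..d i} {0..d i}"
    and \<sigma>_sort: "\<forall>i\<in>{1..n}. \<forall>j\<in>{0..<d i}. f i (p i (\<sigma> i j)) \<le> f i (p i (\<sigma> i (Suc j)))"
begin

definition tau :: "nat \<Rightarrow> nat \<Rightarrow> nat" where
  "tau i = inv_into {0..d i} (\<sigma> i)"

lemma pp: assumes "i \<in> {1..n}" shows "perm_pair (d i) (\<sigma> i) (tau i)"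
proof -
  have B: "bij_betw (\<sigma> i) {0..d i} {0..d i}" using \<sigma>_perm assms by blast
  have B': "bij_betw (tau i) {0..d i} {0..d i}" unfolding tau_def by (rule bij_betw_inv_into[OF B])
  show ?thesis unfolding perm_pair_def
  proof (intro allI impI conjI)
    fix k assume k: "k \<le> d i"
    show "\<sigma> i k \<le> d i" using bij_betw_apply[OF B] k by auto
    show "tau i k \<le> d i" using bij_betw_apply[OF B'] k by auto
    show "\<sigma> i (tau i k) = k" unfolding tau_def using bij_betw_inv_into_right[OF B] k by auto
    show "tau i (\<sigma> i k) = k" unfolding tau_def using bij_betw_inv_into_left[OF B] k by auto
  qed
qed

lemma pp': "i \<in> {1..n} \<Longrightarrow> perm_pair (d i) (tau i) (\<sigma> i)"
  using perm_pair_sym[OF pp] .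

abbreviation Ps :: "(nat \<Rightarrow> nat) \<Rightarrow> real" where
  "Ps \<equiv> psi n p f phi \<sigma>"

lemma hmono: assumes "i \<in> {1..n}" "m \<le> m'" "m' \<le> d i"
  shows "f i (p i (\<sigma> i m)) \<le> f i (p i (\<sigma> i m'))"
  using assms(2,3)
proof (induction m' rule: dec_induct)
  case base then show ?case by simp
next
  case (step k)
  then have "f i (p i (\<sigma> i k)) \<le> f i (p i (\<sigma> i (Suc k)))" using \<sigma>_sort assms(1) by auto
  then show ?case using step by simp
qed

lemma CGps: "(\<forall>i\<in>{1..n}. a i = b i) \<Longrightarrow> Ps a = Ps b"
proof -
  assume h: "\<forall>i\<in>{1..n}. a i = b i"
  have "vecn n (\<lambda>i. f i (p i (\<sigma> i (a i)))) = vecn n (\<lambda>i. f i (p i (\<sigma> i (b i))))"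
    using h by (auto simp: vecn_def fun_eq_iff)
  then show ?thesis by (simp add: psi_def)
qed

lemma SMps:
  assumes ab: "\<forall>i\<in>{1..n}. a i \<le> d i \<and> b i \<le> d i"
  shows "Ps a + Ps b \<le> Ps (\<lambda>i. max (a i) (b i)) + Ps (\<lambda>i. min (a i) (b i))"
proof -
  define G where "G = (\<lambda>a. vecn n (\<lambda>i. f i (p i (\<sigma> i (a i)))))"
  have Gmax: "G (\<lambda>i. max (a i) (b i)) = (\<lambda>i. max (G a i) (G b i))"
  proof
    fix i show "G (\<lambda>i. max (a i) (b i)) i = max (G a i) (G b i)"
    proof (cases "i \<in> {1..n}")
      case True
      then show ?thesis using hmono[OF True, of "a i" "b i"] hmono[OF True, of "b i" "a i"] ab
        by (cases "a i \<le> b i") (auto simp: G_def vecn_def max_def)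
    qed (auto simp: G_def vecn_def)
  qed
  have Gmin: "G (\<lambda>i. min (a i) (b i)) = (\<lambda>i. min (G a i) (G b i))"
  proof
    fix i show "G (\<lambda>i. min (a i) (b i)) i = min (G a i) (G b i)"
    proof (cases "i \<in> {1..n}")
      case True
      then show ?thesis using hmono[OF True, of "a i" "b i"] hmono[OF True, of "b i" "a i"] ab
        by (cases "a i \<le> b i") (auto simp: G_def vecn_def min_def)
    qed (auto simp: G_def vecn_def)
  qed
  have inbox: "G c \<in> dom_box n L U" if "\<forall>i\<in>{1..n}. c i \<le> d i" for c
  proof -
    have "\<sigma> i (c i) \<in> {0..d i}" if "i \<in> {1..n}" for i
      using bij_betw_apply[of "\<sigma> i" "{0..d i}" "{0..d i}" "c i"] \<sigma>_perm that \<open>\<forall>i\<in>{1..n}. c i \<le> d i\<close> by auto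
    then show ?thesis using f_range by (auto simp: dom_box_def G_def vecn_def)
  qed
  have "phi (G a) + phi (G b) \<le> phi (\<lambda>i. max (G a i) (G b i)) + phi (\<lambda>i. min (G a i) (G b i))"
  proof -
    have "G a \<in> dom_box n L U" "G b \<in> dom_box n L U" using inbox[of a] inbox[of b] ab by auto
    from phi_super[unfolded supermodular_on_def, rule_format, OF this] show ?thesis by simp
  qed
  moreover have PG: "\<And>c. Ps c = phi (G c)" by (simp add: psi_def G_def)
  ultimately show ?thesis by (simp only: PG Gmax Gmin)
qed

lemmas key' = key[of _ _ Ps, OF SMps CGps]
lemmas lower' = lower[of _ _ Ps, OF SMps CGps]

definition Xof :: "(nat \<Rightarrow> nat \<Rightarrow> real) \<Rightarrow> nat \<Rightarrow> real" where
  "Xof z i = (if i \<in> {1..n} then p i 0 + (\<Sum>j\<in>{1..d i}. (p i j - p i (j - 1)) * z i j) else 0)"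

definition Phi :: "(nat \<Rightarrow> nat \<Rightarrow> real) \<Rightarrow> real \<Rightarrow> pt" where
  "Phi z' mu = (Xof (Lsig n d \<sigma> z'), Lsig n d \<sigma> z', mu)"

lemma inv1: "i \<in> {1..n} \<Longrightarrow> j \<in> {1..d i} \<Longrightarrow> Lsig n d tau (Lsig n d \<sigma> z) i j = z i j"
  using Lb_inv[OF pp] by (simp add: Lsig_i)

lemma inv2: "i \<in> {1..n} \<Longrightarrow> j \<in> {1..d i} \<Longrightarrow> Lsig n d \<sigma> (Lsig n d tau z) i j = z i j"
  using Lb_inv[OF pp'] by (simp add: Lsig_i)

lemma Lsig_onehot: "i \<in> {1..n} \<Longrightarrow> j \<in> {1..d i} \<Longrightarrow> g i \<le> d i \<Longrightarrow>
   Lsig n d \<sigma> (\<lambda>i j. of_bool (j \<le> g i)) i j = of_bool (j \<le> \<sigma> i (g i))"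
  using Lb_onehot[OF pp] by (simp add: Lsig_i)

lemma Lsig_onehot': "i \<in> {1..n} \<Longrightarrow> j \<in> {1..d i} \<Longrightarrow> g i \<le> d i \<Longrightarrow>
   Lsig n d tau (\<lambda>i j. of_bool (j \<le> g i)) i j = of_bool (j \<le> tau i (g i))"
  using Lb_onehot[OF pp'] by (simp add: Lsig_i)

lemma Xof_onehot: assumes "i \<in> {1..n}" "K \<le> d i" "\<forall>j\<in>{1..d i}. z i j = of_bool (j \<le> K)"
  shows "Xof z i = p i K"
proof -
  have "Xof z i = p i 0 + (\<Sum>j\<in>{1..d i}. (p i j - p i (j - 1)) * of_bool (j \<le> K))"
    using assms by (simp add: Xof_def)
  also have "\<dots> = p i K" by (rule tele_onehot[OF assms(2)])
  finally show ?thesis .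
qed

lemma in_B_iff: "in_B (d i) (p i) xi zi \<longleftrightarrow> xi = p i 0 + (\<Sum>j\<in>{1..d i}. (p i j - p i (j - 1)) * zi j) \<and> inD (d i) zi"
  by (simp add: in_B_def inD_def)

lemma E_alt: "q \<in> E_relax n d p f phi \<sigma> \<longleftrightarrow> q \<in> mip_space n d \<and>
   (\<forall>i\<in>{1..n}. in_B (d i) (p i) (fst q i) (fst (snd q) i)) \<and>
   (\<exists>z'. Lsig n d \<sigma> z' = fst (snd q) \<and> (\<forall>\<pi>. staircase n d \<pi> \<longrightarrow> snd (snd q) \<le> Api n d Ps \<pi> z'))"
  by (cases q) (simp add: E_relax_def Api_def NN_def)

lemma Q_char: "q \<in> E_relax n d p f phi \<sigma> \<longleftrightarrow> (\<exists>z' mu. (\<forall>i\<in>{1..n}. inD (d i) (z' i)) \<and>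
    (\<forall>\<pi>. staircase n d \<pi> \<longrightarrow> mu \<le> Api n d Ps \<pi> z') \<and> q = Phi z' mu)"
proof
  assume q: "q \<in> E_relax n d p f phi \<sigma>"
  obtain x z mu where qq: "q = (x, z, mu)" by (cases q)
  have mip: "q \<in> mip_space n d" and inB: "\<forall>i\<in>{1..n}. in_B (d i) (p i) (x i) (z i)"
    using q unfolding E_alt qq by auto
  obtain z' where Lz: "Lsig n d \<sigma> z' = z" and cons: "\<forall>\<pi>. staircase n d \<pi> \<longrightarrow> mu \<le> Api n d Ps \<pi> z'"
    using q unfolding E_alt qq by auto
  have iD: "\<forall>i\<in>{1..n}. inD (d i) (z' i)"
  proof
    fix i assume i: "i \<in> {1..n}"
    have "inD (d i) (z i)" using inB i in_B_iff by blast
    moreover have "z i = Lb (d i) (\<sigma> i) (z' i)" using Lz[symmetric] Lsig_i[OF i] by simp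
    moreover have "1 \<le> d i" using d_pos i by blast
    ultimately show "inD (d i) (z' i)" using inD_Lb[OF pp[OF i], of "z' i"] by simp
  qed
  have xX: "x = Xof z"
  proof
    fix i show "x i = Xof z i"
    proof (cases "i \<in> {1..n}")
      case True then show ?thesis using inB in_B_iff by (simp add: Xof_def)
    next
      case False
      have "x i = 0" using mip False unfolding qq mip_space_def by blast
      then show ?thesis unfolding Xof_def if_not_P[OF False] .
    qed
  qed
  show "\<exists>z' mu. (\<forall>i\<in>{1..n}. inD (d i) (z' i)) \<and> (\<forall>\<pi>. staircase n d \<pi> \<longrightarrow> mu \<le> Api n d Ps \<pi> z') \<and> q = Phi z' mu"
    using iD cons qq xX Lz by (auto simp: Phi_def)
next
  assume "\<exists>z' mu. (\<forall>i\<in>{1..n}. inD (d i) (z' i)) \<and> (\<forall>\<pi>. staircase n d \<pi> \<longrightarrow> mu \<le> Api n d Ps \<pi> z') \<and> q = Phi z' mu"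
  then obtain z' mu where iD: "\<forall>i\<in>{1..n}. inD (d i) (z' i)" and cons: "\<forall>\<pi>. staircase n d \<pi> \<longrightarrow> mu \<le> Api n d Ps \<pi> z'"
    and qq: "q = Phi z' mu" by blast
  have mip: "q \<in> mip_space n d"
    unfolding qq Phi_def mip_space_def using Lsig_zero by (auto simp: Xof_def)
  have inB: "\<forall>i\<in>{1..n}. in_B (d i) (p i) (fst q i) (fst (snd q) i)"
  proof
    fix i assume i: "i \<in> {1..n}"
    have "inD (d i) (Lsig n d \<sigma> z' i)" using iD i inD_Lb[OF pp[OF i], of "z' i"] d_pos by (simp add: Lsig_i)
    then show "in_B (d i) (p i) (fst q i) (fst (snd q) i)" using i unfolding in_B_iff qq Phi_def
      by (simp add: Xof_def)
  qed
  show "q \<in> E_relax n d p f phi \<sigma>" unfolding E_alt using mip inB cons qq by (auto simp: Phi_def)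
qed

end


lemma inD_map:
  assumes "inD D v" "mono h" "h 1 \<le> 1" "0 \<le> h 0"
  shows "inD D (\<lambda>j. h (v j))"
proof -
  have "D \<ge> 1 \<Longrightarrow> h (v 1) \<le> 1" using assms monoD[OF assms(2), of "v 1" 1] by (auto simp: inD_def)
  moreover have "D \<ge> 1 \<Longrightarrow> 0 \<le> h (v D)" using assms monoD[OF assms(2), of 0 "v D"] by (auto simp: inD_def)
  moreover have "\<forall>j\<in>{1..<D}. h (v (Suc j)) \<le> h (v j)" using assms(1) monoD[OF assms(2)] by (auto simp: inD_def)
  ultimately show ?thesis by (simp add: inD_def)
qed

lemma ball_img: "(\<forall>x\<in>f ` A. P x) \<longleftrightarrow> (\<forall>a\<in>A. P (f a))" by blast

lemma ball_Sig: "(\<forall>x\<in>Sigma A B. P x) \<longleftrightarrow> (\<forall>a\<in>A. \<forall>b\<in>B a. P (a, b))" by auto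

context thm_ctx
begin

lemma E_lin: "q \<in> E_relax n d p f phi \<sigma> \<longleftrightarrow> q \<in> mip_space n d \<and>
   (\<forall>i\<in>{1..n}. fst q i = Xof (fst (snd q)) i \<and> inD (d i) (fst (snd q) i)) \<and>
   (\<forall>\<pi>. staircase n d \<pi> \<longrightarrow> snd (snd q) \<le> Api n d Ps \<pi> (Lsig n d tau (fst (snd q))))"
proof -
  obtain x z mu where qq: "q = (x, z, mu)" by (cases q)
  have B: "(\<forall>i\<in>{1..n}. in_B (d i) (p i) (x i) (z i)) \<longleftrightarrow> (\<forall>i\<in>{1..n}. x i = Xof z i \<and> inD (d i) (z i))"
    by (auto simp: in_B_iff Xof_def)
  have Z: "(\<exists>z'. Lsig n d \<sigma> z' = z \<and> (\<forall>\<pi>. staircase n d \<pi> \<longrightarrow> mu \<le> Api n d Ps \<pi> z'))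
      \<longleftrightarrow> (\<forall>\<pi>. staircase n d \<pi> \<longrightarrow> mu \<le> Api n d Ps \<pi> (Lsig n d tau z))" if mip: "q \<in> mip_space n d"
  proof
    assume "\<exists>z'. Lsig n d \<sigma> z' = z \<and> (\<forall>\<pi>. staircase n d \<pi> \<longrightarrow> mu \<le> Api n d Ps \<pi> z')"
    then obtain z' where Lz: "Lsig n d \<sigma> z' = z" and c: "\<forall>\<pi>. staircase n d \<pi> \<longrightarrow> mu \<le> Api n d Ps \<pi> z'" by blast
    show "\<forall>\<pi>. staircase n d \<pi> \<longrightarrow> mu \<le> Api n d Ps \<pi> (Lsig n d tau z)"
    proof (intro allI impI)
      fix \<pi> assume st: "staircase n d \<pi>"
      have "Api n d Ps \<pi> z' = Api n d Ps \<pi> (Lsig n d tau z)"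
      proof (rule Api_cong[OF st], clarify)
        fix i j assume "(i, j) \<in> Pset n d"
        then have "i \<in> {1..n}" "j \<in> {1..d i}" by (auto simp: Pset_def)
        then show "z' i j = Lsig n d tau z i j" using inv1 Lz by metis
      qed
      moreover have "mu \<le> Api n d Ps \<pi> z'" using c st by blast
      ultimately show "mu \<le> Api n d Ps \<pi> (Lsig n d tau z)" by linarith
    qed
  next
    assume c: "\<forall>\<pi>. staircase n d \<pi> \<longrightarrow> mu \<le> Api n d Ps \<pi> (Lsig n d tau z)"
    have "Lsig n d \<sigma> (Lsig n d tau z) = z"
    proof (intro ext)
      fix i j
      show "Lsig n d \<sigma> (Lsig n d tau z) i j = z i j"
      proof (cases "i \<in> {1..n} \<and> j \<in> {1..d i}")
        case True then show ?thesis using inv2 by blast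
      next
        case False
        then have "z i j = 0" using mip unfolding qq mip_space_def by blast
        then show ?thesis using Lsig_zero[of i n j d, OF False] by simp
      qed
    qed
    then show "\<exists>z'. Lsig n d \<sigma> z' = z \<and> (\<forall>\<pi>. staircase n d \<pi> \<longrightarrow> mu \<le> Api n d Ps \<pi> z')"
      using c by blast
  qed
  show ?thesis unfolding E_alt using B Z unfolding qq by auto
qed

definition PF :: "(nat \<Rightarrow> nat \<times> nat) set" where
  "PF = (\<lambda>\<pi>. restrict \<pi> {1..NN n d}) ` {\<pi>. staircase n d \<pi>}"

definition GS :: "(pt \<Rightarrow> real) set" where
  "GS = (\<lambda>i q. fst q i - Xof (fst (snd q)) i) ` {1..n} \<union>
        (\<lambda>i q. Xof (fst (snd q)) i - fst q i) ` {1..n} \<union>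
        (\<lambda>i q. fst (snd q) i 1 - 1) ` {1..n} \<union>
        (\<lambda>i q. - fst (snd q) i (d i)) ` {1..n} \<union>
        (\<lambda>ij q. fst (snd q) (fst ij) (Suc (snd ij)) - fst (snd q) (fst ij) (snd ij)) ` (Sigma {1..n} (\<lambda>i. {1..<d i})) \<union>
        (\<lambda>\<pi> q. snd (snd q) - Api n d Ps \<pi> (Lsig n d tau (fst (snd q)))) ` PF"

lemma GS_iff: "(\<forall>g\<in>GS. g q \<le> 0) \<longleftrightarrow>
   (\<forall>i\<in>{1..n}. fst q i = Xof (fst (snd q)) i \<and> inD (d i) (fst (snd q) i)) \<and>
   (\<forall>\<pi>. staircase n d \<pi> \<longrightarrow> snd (snd q) \<le> Api n d Ps \<pi> (Lsig n d tau (fst (snd q))))"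
proof -
  have P: "(\<forall>\<pi>\<in>PF. snd (snd q) - Api n d Ps \<pi> (Lsig n d tau (fst (snd q))) \<le> 0) \<longleftrightarrow>
     (\<forall>\<pi>. staircase n d \<pi> \<longrightarrow> snd (snd q) \<le> Api n d Ps \<pi> (Lsig n d tau (fst (snd q))))"
  proof -
    have AR: "Api n d Ps (restrict \<pi> {1..NN n d}) w = Api n d Ps \<pi> w" for \<pi> w by (rule Api_restrict)
    show ?thesis unfolding PF_def by (auto simp only: AR image_iff mem_Collect_eq Ball_def)
  qed
  have D: "inD (d i) v \<longleftrightarrow> v 1 - 1 \<le> 0 \<and> - v (d i) \<le> 0 \<and> (\<forall>j\<in>{1..<d i}. v (Suc j) - v j \<le> 0)"
    if "i \<in> {1..n}" for i v
    using d_pos that by (auto simp: inD_def)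
  have "(\<forall>g\<in>GS. g q \<le> 0) \<longleftrightarrow>
     (\<forall>i\<in>{1..n}. fst q i - Xof (fst (snd q)) i \<le> 0) \<and>
     (\<forall>i\<in>{1..n}. Xof (fst (snd q)) i - fst q i \<le> 0) \<and>
     (\<forall>i\<in>{1..n}. fst (snd q) i 1 - 1 \<le> 0) \<and>
     (\<forall>i\<in>{1..n}. - fst (snd q) i (d i) \<le> 0) \<and>
     (\<forall>i\<in>{1..n}. \<forall>j\<in>{1..<d i}. fst (snd q) i (Suc j) - fst (snd q) i j \<le> 0) \<and>
     (\<forall>\<pi>\<in>PF. snd (snd q) - Api n d Ps \<pi> (Lsig n d tau (fst (snd q))) \<le> 0)"
    unfolding GS_def ball_Un ball_img ball_Sig by simp
  then show ?thesis unfolding P using D by fastforce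
qed

lemma finite_GS: "finite GS"
proof -
  have "PF \<subseteq> Pi\<^sub>E {1..NN n d} (\<lambda>_. {1..n} \<times> {0..NN n d})"
  proof
    fix \<rho> assume "\<rho> \<in> PF"
    then obtain \<pi> where st: "staircase n d \<pi>" and r: "\<rho> = restrict \<pi> {1..NN n d}" by (auto simp: PF_def)
    have "\<pi> t \<in> {1..n} \<times> {0..NN n d}" if t: "t \<in> {1..NN n d}" for t
    proof -
      have "snd (\<pi> t) = card {s\<in>{1..t}. fst (\<pi> s) = fst (\<pi> t)}" using stairD(2)[OF st t] .
      also have "\<dots> \<le> card {1..t}" by (rule card_mono) auto
      also have "\<dots> \<le> NN n d" using t by simp
      finally show ?thesis using stairD(1)[OF st t] by (cases "\<pi> t") auto
    qed
    then show "\<rho> \<in> Pi\<^sub>E {1..NN n d} (\<lambda>_. {1..n} \<times> {0..NN n d})" unfolding r restrict_PiE_iff by blast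
  qed
  moreover have "finite (Pi\<^sub>E {1..NN n d} (\<lambda>_. {1..n} \<times> {0..NN n d}))" by (rule finite_PiE) auto
  ultimately have "finite PF" by (rule finite_subset)
  then show ?thesis unfolding GS_def by simp
qed

lemma aff_Xof: "is_aff n d (\<lambda>q. Xof (fst (snd q)) i)"
  unfolding Xof_def
  by (intro aff_if aff_add aff_const aff_sum ballI finite_atLeastAtMost aff_cmul aff_z)

lemma aff_Api: "is_aff n d (\<lambda>q. Api n d Ps \<pi> (Lsig n d tau (fst (snd q))))"
  unfolding Api_def
  by (intro aff_add aff_const aff_sum ballI finite_atLeastAtMost aff_cmul aff_Lsig)

lemma aff_GS: "\<forall>g\<in>GS. is_aff n d g"
  unfolding GS_def
  by (auto intro!: aff_diff aff_x aff_z aff_const aff_neg aff_mu aff_Xof aff_Api)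

lemma poly: "polyhedron_in n d (E_relax n d p f phi \<sigma>)"
proof -
  have "E_relax n d p f phi \<sigma> = {q\<in>mip_space n d. \<forall>g\<in>GS. g q \<le> 0}"
    using E_lin GS_iff by blast
  then show ?thesis using poly_of_affs[OF finite_GS aff_GS] by simp
qed

end


context thm_ctx
begin

lemma lowerP: "staircase n d \<pi> \<Longrightarrow> \<forall>i\<in>{1..n}. g i \<le> d i \<Longrightarrow>
    Ps g \<le> Api n d Ps \<pi> (\<lambda>i j. of_bool (j \<le> g i))"
  apply (rule lower)
     apply (erule SMps)
    apply (erule CGps)
   apply assumption+
  done

lemma keyP: "\<forall>i\<in>{1..n}. inD (d i) (w i) \<Longrightarrow> good n d w \<pi> pos \<Longrightarrow> staircase n d \<pi>' \<Longrightarrow>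
    Api n d Ps \<pi> w \<le> Api n d Ps \<pi>' w"
  apply (rule key)
      apply (erule SMps)
     apply (erule CGps)
    apply assumption+
  done

lemma vecn_cong: "(\<forall>i\<in>{1..n}. a i = b i) \<Longrightarrow> vecn n a = vecn n b"
  by (auto simp: vecn_def fun_eq_iff)

lemma bin_grid:
  assumes iD: "\<forall>i\<in>{1..n}. inD (d i) (w i)" and bin: "\<forall>(i, j)\<in>Pset n d. w i j \<in> {0, 1}"
  shows "\<exists>g \<pi>. staircase n d \<pi> \<and> (\<forall>i\<in>{1..n}. g i \<le> d i) \<and>
     (\<forall>(i, j)\<in>Pset n d. w i j = of_bool (j \<le> g i)) \<and> Api n d Ps \<pi> w = Ps g"
proof -
  obtain \<pi> pos where gd: "good n d w \<pi> pos" using exists_good[OF iD] by blast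
  from binary[OF iD gd bin, of Ps] gd_stair[OF iD gd] show ?thesis by blast
qed

lemma Lsig_grid:
  assumes "\<forall>i\<in>{1..n}. g i \<le> d i" "\<forall>(i, j)\<in>Pset n d. w i j = of_bool (j \<le> g i)"
  shows "Lsig n d \<sigma> w = Lsig n d \<sigma> (\<lambda>i j. of_bool (j \<le> g i))"
  by (rule Lsig_cong) (use assms(2) in \<open>auto simp: Pset_def\<close>)

lemma Xof_grid:
  assumes g: "\<forall>i\<in>{1..n}. g i \<le> d i"
  shows "Xof (Lsig n d \<sigma> (\<lambda>i j. of_bool (j \<le> g i))) i = (if i \<in> {1..n} then p i (\<sigma> i (g i)) else 0)"
proof (cases "i \<in> {1..n}")
  case True
  have "\<sigma> i (g i) \<le> d i" using perm_pairD(1)[OF pp[OF True]] g True by blast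
  moreover have "\<forall>j\<in>{1..d i}. Lsig n d \<sigma> (\<lambda>i j. of_bool (j \<le> g i)) i j = of_bool (j \<le> \<sigma> i (g i))"
    using Lsig_onehot True g by blast
  ultimately show ?thesis using Xof_onehot[OF True] True by simp
next
  case False then show ?thesis unfolding Xof_def if_not_P[OF False] by simp
qed

lemma proj: "(\<lambda>(x, z, mu). (x, mu)) ` E_set n d p f phi \<sigma> = hypograph n d p f phi"
proof
  show "(\<lambda>(x, z, mu). (x, mu)) ` E_set n d p f phi \<sigma> \<subseteq> hypograph n d p f phi"
  proof clarify
    fix x z mu assume E: "(x, z, mu) \<in> E_set n d p f phi \<sigma>"
    then have Q: "(x, z, mu) \<in> E_relax n d p f phi \<sigma>" and zb: "z_binary n d (x, z, mu)"
      by (auto simp: E_set_def)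
    obtain z' mu' where iD: "\<forall>i\<in>{1..n}. inD (d i) (z' i)" and cons: "\<forall>\<pi>. staircase n d \<pi> \<longrightarrow> mu' \<le> Api n d Ps \<pi> z'"
      and qq: "(x, z, mu) = Phi z' mu'" using Q unfolding Q_char by blast
    have zz: "z = Lsig n d \<sigma> z'" and xx: "x = Xof (Lsig n d \<sigma> z')" and mm: "mu = mu'"
      using qq by (auto simp: Phi_def)
    have iDz: "\<forall>i\<in>{1..n}. inD (d i) (z i)"
      using iD d_pos inD_Lb[OF pp] by (simp add: zz Lsig_i)
    have binz: "\<forall>(i, j)\<in>Pset n d. z i j \<in> {0, 1}" using zb by (auto simp: z_binary_def Pset_def)
    obtain g0 \<pi>0 where g0: "\<forall>i\<in>{1..n}. g0 i \<le> d i" "\<forall>(i, j)\<in>Pset n d. z i j = of_bool (j \<le> g0 i)"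
      using bin_grid[OF iDz binz] by blast
    have binz1: "z' i j \<in> {0, 1}" if ij: "(i, j) \<in> Pset n d" for i j
    proof -
      from ij have i: "i \<in> {1..n}" "j \<in> {1..d i}" by (auto simp: Pset_def)
      have "z' i j = Lsig n d tau z i j" using inv1[OF i] zz by simp
      also have "Lsig n d tau z = Lsig n d tau (\<lambda>i j. of_bool (j \<le> g0 i))"
        by (rule Lsig_cong) (use g0(2) in \<open>auto simp: Pset_def\<close>)
      also have "\<dots> i j = of_bool (j \<le> tau i (g0 i))" using Lsig_onehot'[OF i] g0(1) i by blast
      finally show "z' i j \<in> {0, 1}" by simp
    qed
    have binz': "\<forall>(i, j)\<in>Pset n d. z' i j \<in> {0, 1}" using binz1 by blast
    obtain g \<pi> where st: "staircase n d \<pi>" and g: "\<forall>i\<in>{1..n}. g i \<le> d i"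
      "\<forall>(i, j)\<in>Pset n d. z' i j = of_bool (j \<le> g i)" and A: "Api n d Ps \<pi> z' = Ps g"
      using bin_grid[OF iD binz'] by blast
    have xg: "x i = (if i \<in> {1..n} then p i (\<sigma> i (g i)) else 0)" for i
      using xx Lsig_grid[OF g] Xof_grid[OF g(1)] by simp
    have "x \<in> gridX n d p"
      unfolding gridX_def using xg perm_pairD(1)[OF pp] g(1) by fastforce
    moreover have "mu \<le> phi (vecn n (\<lambda>i. f i (x i)))"
    proof -
      have "mu' \<le> Api n d Ps \<pi> z'" using cons st by blast
      then have "mu \<le> Ps g" using A mm by linarith
      also have "Ps g = phi (vecn n (\<lambda>i. f i (x i)))"
        unfolding psi_def by (rule arg_cong[where f=phi], rule vecn_cong) (simp add: xg)
      finally show ?thesis .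
    qed
    ultimately show "(x, mu) \<in> hypograph n d p f phi" by (simp add: hypograph_def)
  qed
next
  show "hypograph n d p f phi \<subseteq> (\<lambda>(x, z, mu). (x, mu)) ` E_set n d p f phi \<sigma>"
  proof clarify
    fix x mu assume H: "(x, mu) \<in> hypograph n d p f phi"
    then have gx: "x \<in> gridX n d p" and mu: "mu \<le> phi (vecn n (\<lambda>i. f i (x i)))"
      by (auto simp: hypograph_def)
    have "\<forall>i\<in>{1..n}. \<exists>j. j \<in> {0..d i} \<and> x i = p i j" using gx unfolding gridX_def by blast
    then obtain k where k: "\<forall>i\<in>{1..n}. k i \<in> {0..d i} \<and> x i = p i (k i)" using bchoice by metis
    have x0: "\<forall>i. i \<notin> {1..n} \<longrightarrow> x i = 0" using gx by (simp add: gridX_def)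
    define g where "g = (\<lambda>i. tau i (k i))"
    have gb: "\<forall>i\<in>{1..n}. g i \<le> d i" using perm_pairD(2)[OF pp] k by (auto simp: g_def)
    have sg: "\<forall>i\<in>{1..n}. \<sigma> i (g i) = k i" using perm_pairD(3)[OF pp] k by (auto simp: g_def)
    define z' where "z' = (\<lambda>i j. of_bool (j \<le> g i) :: real)"
    define q where "q = Phi z' mu"
    have Psg: "Ps g = phi (vecn n (\<lambda>i. f i (x i)))"
      unfolding psi_def by (rule arg_cong[where f=phi], rule vecn_cong) (simp add: sg k)
    have iD: "\<forall>i\<in>{1..n}. inD (d i) (z' i)" by (auto simp: inD_def z'_def)
    have cons: "\<forall>\<pi>. staircase n d \<pi> \<longrightarrow> mu \<le> Api n d Ps \<pi> z'"
    proof (intro allI impI)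
      fix \<pi> assume st: "staircase n d \<pi>"
      have "Ps g \<le> Api n d Ps \<pi> z'" unfolding z'_def by (rule lowerP[OF st gb])
      then show "mu \<le> Api n d Ps \<pi> z'" using mu Psg by simp
    qed
    have qQ: "q \<in> E_relax n d p f phi \<sigma>" unfolding Q_char q_def using iD cons by blast
    have zb: "z_binary n d q"
      unfolding q_def Phi_def z_binary_def z'_def using Lsig_onehot gb by auto
    have xq: "Xof (Lsig n d \<sigma> z') = x"
    proof
      fix i show "Xof (Lsig n d \<sigma> z') i = x i"
        unfolding z'_def using Xof_grid[OF gb, of i] sg k x0 by auto
    qed
    have "q \<in> E_set n d p f phi \<sigma>" using qQ zb by (simp add: E_set_def)
    moreover have "(x, mu) = (\<lambda>(x, z, mu). (x, mu)) q" by (simp add: q_def Phi_def xq)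
    ultimately show "(x, mu) \<in> (\<lambda>(x, z, mu). (x, mu)) ` E_set n d p f phi \<sigma>" by blast
  qed
qed

end


context thm_ctx
begin

lemma Xof_comb: "Xof (\<lambda>i j. (1 - u) * A i j + u * B i j) i = (1 - u) * Xof A i + u * Xof B i"
proof (cases "i \<in> {1..n}")
  case True
  have "(\<Sum>j\<in>{1..d i}. (p i j - p i (j - 1)) * ((1 - u) * A i j + u * B i j))
      = (1 - u) * (\<Sum>j\<in>{1..d i}. (p i j - p i (j - 1)) * A i j) + u * (\<Sum>j\<in>{1..d i}. (p i j - p i (j - 1)) * B i j)"
    by (simp add: sum_distrib_left sum.distrib[symmetric] algebra_simps)
  then show ?thesis using True by (simp add: Xof_def algebra_simps)
next
  case False then show ?thesis unfolding Xof_def if_not_P[OF False] by simp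
qed

lemma vertex: assumes V: "vertex_of (E_relax n d p f phi \<sigma>) q" shows "z_binary n d q"
proof (rule ccontr)
  assume nb: "\<not> z_binary n d q"
  let ?Q = "E_relax n d p f phi \<sigma>"
  have qQ: "q \<in> ?Q" using V by (simp add: vertex_of_def)
  obtain z' mu where iD: "\<forall>i\<in>{1..n}. inD (d i) (z' i)" and cons: "\<forall>\<pi>. staircase n d \<pi> \<longrightarrow> mu \<le> Api n d Ps \<pi> z'"
      and qq: "q = Phi z' mu" using qQ unfolding Q_char by blast
  have "\<exists>(i, j)\<in>Pset n d. z' i j \<notin> {0, 1}"
  proof (rule ccontr)
    assume "\<not> (\<exists>(i, j)\<in>Pset n d. z' i j \<notin> {0, 1})"
    then have bin: "\<forall>(i, j)\<in>Pset n d. z' i j \<in> {0, 1}" by blast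
    obtain g \<pi> where g: "\<forall>i\<in>{1..n}. g i \<le> d i" "\<forall>(i, j)\<in>Pset n d. z' i j = of_bool (j \<le> g i)"
      using bin_grid[OF iD bin] by blast
    have "Lsig n d \<sigma> z' = Lsig n d \<sigma> (\<lambda>i j. of_bool (j \<le> g i))" by (rule Lsig_grid[OF g])
    then have "z_binary n d q" unfolding qq Phi_def z_binary_def using Lsig_onehot g(1) by auto
    then show False using nb by simp
  qed
  then obtain i1 j1 where ij1: "(i1, j1) \<in> Pset n d" and nb1: "z' i1 j1 \<notin> {0, 1}" by blast
  define u where "u = z' i1 j1"
  have u01: "0 < u" "u < 1" using inD_vals[OF iD ij1] nb1 by (auto simp: u_def)
  define ha where "ha = (\<lambda>v::real. max (v - u) 0 / (1 - u))"
  define hb where "hb = (\<lambda>v::real. min v u / u)"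
  define za where "za = (\<lambda>i j. ha (z' i j))"
  define zb where "zb = (\<lambda>i j. hb (z' i j))"
  have mono_a: "mono ha" unfolding ha_def mono_def using u01 by (auto intro!: divide_right_mono)
  have mono_b: "mono hb" unfolding hb_def mono_def using u01 by (auto intro!: divide_right_mono)
  have iDa: "\<forall>i\<in>{1..n}. inD (d i) (za i)"
    using iD inD_map[OF _ mono_a] u01 unfolding za_def by (simp add: ha_def)
  have iDb: "\<forall>i\<in>{1..n}. inD (d i) (zb i)"
    using iD inD_map[OF _ mono_b] u01 unfolding zb_def by (simp add: hb_def)
  obtain \<pi> pos where gd: "good n d z' \<pi> pos" using exists_good[OF iD] by blast
  have gda: "good n d za \<pi> pos" unfolding za_def by (rule good_mono[OF gd mono_a])
  have gdb: "good n d zb \<pi> pos" unfolding zb_def by (rule good_mono[OF gd mono_b])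
  have st: "staircase n d \<pi>" using gd_stair[OF iD gd] .
  have zeq: "(1 - u) * za i j + u * zb i j = z' i j" for i j
  proof -
    have "(1 - u) * za i j = max (z' i j - u) 0" using u01 by (simp add: za_def ha_def)
    moreover have "u * zb i j = min (z' i j) u" using u01 by (simp add: zb_def hb_def)
    ultimately show ?thesis by (simp add: max_def min_def)
  qed
  let ?A = "Api n d Ps \<pi>"
  have Aaff: "?A z' = (1 - u) * ?A za + u * ?A zb"
  proof -
    have "?A z' = (\<Sum>t\<in>{0::nat, 1}. (if t = 0 then 1 - u else u) * ?A (if t = 0 then za else zb))"
    proof (rule Api_affine[OF st])
      show "\<forall>(i, j)\<in>Pset n d. z' i j = (\<Sum>t\<in>{0::nat, 1}. (if t = 0 then 1 - u else u) * (if t = 0 then za else zb) i j)"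
        using zeq by simp
    qed simp_all
    then show ?thesis by simp
  qed
  define \<delta> where "\<delta> = ?A z' - mu"
  have \<delta>0: "0 \<le> \<delta>" using cons st by (simp add: \<delta>_def)
  define a where "a = Phi za (?A za - \<delta>)"
  define b where "b = Phi zb (?A zb - \<delta>)"
  have aQ: "a \<in> ?Q" unfolding Q_char a_def
  proof (intro exI conjI allI impI)
    show "\<forall>i\<in>{1..n}. inD (d i) (za i)" by (rule iDa)
    fix \<pi>' assume st': "staircase n d \<pi>'"
    have "?A za \<le> Api n d Ps \<pi>' za" by (rule keyP[OF iDa gda st'])
    then show "?A za - \<delta> \<le> Api n d Ps \<pi>' za" using \<delta>0 by simp
  qed simp
  have bQ: "b \<in> ?Q" unfolding Q_char b_def
  proof (intro exI conjI allI impI)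
    show "\<forall>i\<in>{1..n}. inD (d i) (zb i)" by (rule iDb)
    fix \<pi>' assume st': "staircase n d \<pi>'"
    have "?A zb \<le> Api n d Ps \<pi>' zb" by (rule keyP[OF iDb gdb st'])
    then show "?A zb - \<delta> \<le> Api n d Ps \<pi>' zb" using \<delta>0 by simp
  qed simp
  have zfun: "(\<lambda>i j. (1 - u) * za i j + u * zb i j) = z'" using zeq by (simp add: fun_eq_iff)
  have Lc: "(\<lambda>i j. (1 - u) * Lsig n d \<sigma> za i j + u * Lsig n d \<sigma> zb i j) = Lsig n d \<sigma> z'"
    using Lsig_comb[of n d \<sigma> u za zb] zfun by (simp add: fun_eq_iff)
  have Xc: "(\<lambda>i. (1 - u) * Xof (Lsig n d \<sigma> za) i + u * Xof (Lsig n d \<sigma> zb) i) = Xof (Lsig n d \<sigma> z')"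
    using Xof_comb[of u "Lsig n d \<sigma> za" "Lsig n d \<sigma> zb"] Lc by (simp add: fun_eq_iff)
  have mc: "(1 - u) * (?A za - \<delta>) + u * (?A zb - \<delta>) = mu"
    using Aaff by (simp add: \<delta>_def algebra_simps)
  have qc: "q = comb u a b"
    unfolding qq a_def b_def Phi_def comb_def using Lc Xc mc by simp
  have "a \<noteq> b"
  proof
    assume "a = b"
    then have "Lsig n d \<sigma> za = Lsig n d \<sigma> zb" by (simp add: a_def b_def Phi_def)
    then have "Lsig n d tau (Lsig n d \<sigma> za) i1 j1 = Lsig n d tau (Lsig n d \<sigma> zb) i1 j1" by simp
    moreover have "i1 \<in> {1..n}" "j1 \<in> {1..d i1}" using ij1 by (auto simp: Pset_def)
    ultimately have "za i1 j1 = zb i1 j1" using inv1 by metis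
    moreover have "za i1 j1 = 0" using u01 by (simp add: za_def ha_def u_def[symmetric])
    moreover have "zb i1 j1 = 1" using u01 by (simp add: zb_def hb_def u_def[symmetric])
    ultimately show False by simp
  qed
  then show False using V aQ bQ qc u01 unfolding vertex_of_def by blast
qed

lemma main: "ideal_MIP_formulation n d (E_relax n d p f phi \<sigma>) (E_set n d p f phi \<sigma>) (hypograph n d p f phi)"
  unfolding ideal_MIP_formulation_def MIP_formulation_def
  using poly proj vertex by (simp add: E_set_def)

end

theorem theorem1:
  fixes n :: nat and d :: "nat \<Rightarrow> nat" and p :: "nat \<Rightarrow> nat \<Rightarrow> real"
    and f :: "nat \<Rightarrow> real \<Rightarrow> real" and L U :: "nat \<Rightarrow> real"
    and phi :: "(nat \<Rightarrow> real) \<Rightarrow> real" and \<sigma> :: "nat \<Rightarrow> nat \<Rightarrow> nat"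
  assumes n_pos: "n \<ge> 1"
    and d_pos: "\<forall>i\<in>{1..n}. d i \<ge> 1"
    and p_incr: "\<forall>i\<in>{1..n}. \<forall>j\<in>{1..d i}. p i (j - 1) < p i j"
    and f_range: "\<forall>i\<in>{1..n}. \<forall>j\<in>{0..d i}. L i \<le> f i (p i j) \<and> f i (p i j) \<le> U i"
    and phi_super: "supermodular_on (dom_box n L U) phi"
    and \<sigma>_perm: "\<forall>i\<in>{1..n}. bij_betw (\<sigma> i) {0..d i} {0..d i}"
    and \<sigma>_sort: "\<forall>i\<in>{1..n}. \<forall>j\<in>{0..<d i}. f i (p i (\<sigma> i j)) \<le> f i (p i (\<sigma> i (Suc j)))"
  shows "ideal_MIP_formulation n d (E_relax n d p f phi \<sigma>) (E_set n d p f phi \<sigma>)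
           (hypograph n d p f phi)"
proof -
  interpret thm_ctx n d p f L U phi \<sigma>
    by (unfold_locales; fact assms)
  show ?thesis by (rule main)
qed

end
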